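(* Let $(\pi,\sigma)$ be a commutant pair of projective unitary representations of a countable group $G$ on a Hilbert space $H$ such that the set $\mathcal{B}_\pi$ of Bessel vectors of $\pi$ is dense in $H$. Let $\xi_i,\eta_i\in H$ ($i=1,\dots,k$) be Bessel vectors for $\pi$, and $\vec\xi=(\xi_1,\dots,\xi_k)$, $\vec\eta=(\eta_1,\dots,\eta_k)$. If $[\Theta_{\vec\xi,\pi}(H)]=[\Theta_{\vec\eta,\pi}(H)]$, then $[\sigma^{(k)}(G)\vec\xi\,]=[\sigma^{(k)}(G)\vec\eta\,]$.
   Context: A projective unitary representation of $G$ on $H$ is a map $g\mapsto\pi(g)$ into unitaries with $\pi(g)\pi(h)=\mu(g,h)\pi(gh)$, $\mu:G\times G\to\mathbb{T}$. $\xi$ is a Bessel vector for $\pi$ if $\{\pi(g)\xi\}_{g\in G}$ is a Bessel sequence. $(\pi,\sigma)$ is a commutant pair if $\pi(G)'=\sigma(G)''$. For $\xi\in H$, $\Theta_{\xi,\pi}(x)=\sum_{g}\langle x,\pi(g)\xi\rangle\chi_g\in\ell^2(G)$, and $\Theta_{\vec\xi,\pi}(x)=\Theta_{\xi_1,\pi}(x)\oplus\cdots\oplus\Theta_{\xi_k,\pi}(x)\in\ell^2(G)^{(k)}$. $\sigma^{(k)}(g)=\sigma(g)\oplus\cdots\oplus\sigma(g)$ acts on $H^{(k)}$, the direct sum of $k$ copies of $H$. $[K]$ denotes the closed linear span of $K$. *)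

theory Defs
  imports "HOL-Analysis.Analysis" "HOL-Algebra.Group"
begin

text \<open>Together with the class
  complete_space this gives a complex Hilbert space whose norm and topology are those
  induced by the complex inner product.\<close>

class complex_inner = real_inner +
  fixes scaleC :: "complex \<Rightarrow> 'a \<Rightarrow> 'a"
    and cinner :: "'a \<Rightarrow> 'a \<Rightarrow> complex"
  assumes scaleC_add_right: "scaleC a (x + y) = scaleC a x + scaleC a y"
    and scaleC_add_left: "scaleC (a + b) x = scaleC a x + scaleC b x"
    and scaleC_scaleC: "scaleC a (scaleC b x) = scaleC (a * b) x"
    and scaleC_one: "scaleC 1 x = x"
    and scaleR_scaleC: "scaleR r x = scaleC (complex_of_real r) x"
    and cinner_add_left: "cinner (x + y) z = cinner x z + cinner y z"
    and cinner_scaleC_left: "cinner (scaleC a x) y = a * cinner x y"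
    and cinner_commute: "cinner y x = cnj (cinner x y)"
    and inner_cinner: "inner x y = Re (cinner x y)"

instantiation complex :: complex_inner
begin
definition scaleC_complex :: "complex \<Rightarrow> complex \<Rightarrow> complex" where
  "scaleC_complex a x = a * x"
definition cinner_complex :: "complex \<Rightarrow> complex \<Rightarrow> complex" where
  "cinner_complex x y = x * cnj y"
instance
  by standard (auto simp: scaleC_complex_def cinner_complex_def algebra_simps
      scaleR_conv_of_real inner_complex_def)
end

definition clinear :: "('h::complex_inner \<Rightarrow> 'h) \<Rightarrow> bool" where
  "clinear T \<longleftrightarrow> (\<forall>x y. T (x + y) = T x + T y) \<and> (\<forall>a x. T (scaleC a x) = scaleC a (T x))"

definition bounded_clinear_op :: "('h::complex_inner \<Rightarrow> 'h) \<Rightarrow> bool" where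
  "bounded_clinear_op T \<longleftrightarrow> clinear T \<and> (\<exists>K. \<forall>x. norm (T x) \<le> norm x * K)"

definition unitary_op :: "('h::complex_inner \<Rightarrow> 'h) \<Rightarrow> bool" where
  "unitary_op U \<longleftrightarrow> clinear U \<and> surj U \<and> (\<forall>x y. cinner (U x) (U y) = cinner x y)"

definition commutant :: "('h::complex_inner \<Rightarrow> 'h) set \<Rightarrow> ('h \<Rightarrow> 'h) set" where
  "commutant S = {T. bounded_clinear_op T \<and> (\<forall>s\<in>S. T \<circ> s = s \<circ> T)}"

definition proj_unitary_rep :: "('g, 'b) monoid_scheme \<Rightarrow> ('g \<Rightarrow> 'h::complex_inner \<Rightarrow> 'h) \<Rightarrow> bool" where
  "proj_unitary_rep G \<pi> \<longleftrightarrow>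
     (\<forall>g\<in>carrier G. unitary_op (\<pi> g)) \<and>
     (\<exists>\<mu> :: 'g \<Rightarrow> 'g \<Rightarrow> complex. \<forall>g\<in>carrier G. \<forall>h\<in>carrier G.
        cmod (\<mu> g h) = 1 \<and> \<pi> g \<circ> \<pi> h = (\<lambda>x. scaleC (\<mu> g h) (\<pi> (g \<otimes>\<^bsub>G\<^esub> h) x)))"

definition commutant_pair :: "('g, 'b) monoid_scheme \<Rightarrow> ('g \<Rightarrow> 'h::complex_inner \<Rightarrow> 'h) \<Rightarrow> ('g \<Rightarrow> 'h \<Rightarrow> 'h) \<Rightarrow> bool" where
  "commutant_pair G \<pi> \<sigma> \<longleftrightarrow> commutant (\<pi> ` carrier G) = commutant (commutant (\<sigma> ` carrier G))"

definition bessel_vector :: "('g, 'b) monoid_scheme \<Rightarrow> ('g \<Rightarrow> 'h::complex_inner \<Rightarrow> 'h) \<Rightarrow> 'h \<Rightarrow> bool" where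
  "bessel_vector G \<pi> \<xi> \<longleftrightarrow> (\<exists>B. \<forall>x.
     (\<lambda>g. (cmod (cinner x (\<pi> g \<xi>)))\<^sup>2) summable_on carrier G \<and>
     (\<Sum>\<^sub>\<infinity>g\<in>carrier G. (cmod (cinner x (\<pi> g \<xi>)))\<^sup>2) \<le> B * (norm x)\<^sup>2)"

text \<open>Elements of \<open>\<ell>\<^sup>2(G)\<^sup>(\<^sup>k\<^sup>)\<close> are represented as functions \<open>f i g\<close> with \<open>i < k\<close>,
  \<open>g \<in> carrier G\<close> (zero elsewhere), each row square-summable.\<close>
definition l2k :: "nat \<Rightarrow> ('g, 'b) monoid_scheme \<Rightarrow> (nat \<Rightarrow> 'g \<Rightarrow> complex) \<Rightarrow> bool" where
  "l2k k G f \<longleftrightarrow> (\<forall>i g. (i \<ge> k \<or> g \<notin> carrier G) \<longrightarrow> f i g = 0) \<and>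
     (\<forall>i<k. (\<lambda>g. (cmod (f i g))\<^sup>2) summable_on carrier G)"

definition l2k_dist2 :: "nat \<Rightarrow> ('g, 'b) monoid_scheme \<Rightarrow> (nat \<Rightarrow> 'g \<Rightarrow> complex) \<Rightarrow> (nat \<Rightarrow> 'g \<Rightarrow> complex) \<Rightarrow> real" where
  "l2k_dist2 k G f h = (\<Sum>i<k. \<Sum>\<^sub>\<infinity>g\<in>carrier G. (cmod (f i g - h i g))\<^sup>2)"

definition l2k_span :: "(nat \<Rightarrow> 'g \<Rightarrow> complex) set \<Rightarrow> (nat \<Rightarrow> 'g \<Rightarrow> complex) set" where
  "l2k_span S = {(\<lambda>i g. \<Sum>v\<in>A. c v * v i g) | A c. finite A \<and> A \<subseteq> S}"

definition l2k_closed_span :: "nat \<Rightarrow> ('g, 'b) monoid_scheme \<Rightarrow> (nat \<Rightarrow> 'g \<Rightarrow> complex) set \<Rightarrow> (nat \<Rightarrow> 'g \<Rightarrow> complex) set" where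
  "l2k_closed_span k G S = {f. l2k k G f \<and> (\<forall>e>0. \<exists>h\<in>l2k_span S. l2k_dist2 k G f h < e)}"

definition Theta_vec :: "nat \<Rightarrow> ('g, 'b) monoid_scheme \<Rightarrow> ('g \<Rightarrow> 'h::complex_inner \<Rightarrow> 'h) \<Rightarrow> (nat \<Rightarrow> 'h) \<Rightarrow> 'h \<Rightarrow> (nat \<Rightarrow> 'g \<Rightarrow> complex)" where
  "Theta_vec k G \<pi> \<xi> x = (\<lambda>i g. if i < k \<and> g \<in> carrier G then cinner x (\<pi> g (\<xi> i)) else 0)"

text \<open>Elements of \<open>H\<^sup>(\<^sup>k\<^sup>)\<close> are functions \<open>v :: nat \<Rightarrow> 'h\<close> with \<open>v i = 0\<close> for \<open>i \<ge> k\<close>.\<close>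
definition Hk_span :: "(nat \<Rightarrow> 'h::complex_inner) set \<Rightarrow> (nat \<Rightarrow> 'h) set" where
  "Hk_span S = {(\<lambda>i. \<Sum>v\<in>A. scaleC (c v) (v i)) | A c. finite A \<and> A \<subseteq> S}"

definition Hk_closed_span :: "nat \<Rightarrow> (nat \<Rightarrow> 'h::complex_inner) set \<Rightarrow> (nat \<Rightarrow> 'h) set" where
  "Hk_closed_span k S = {v. (\<forall>i\<ge>k. v i = 0) \<and>
     (\<forall>e>0. \<exists>w\<in>Hk_span S. (\<Sum>i<k. (norm (v i - w i))\<^sup>2) < e)}"

definition rep_k :: "nat \<Rightarrow> ('g \<Rightarrow> 'h::complex_inner \<Rightarrow> 'h) \<Rightarrow> 'g \<Rightarrow> (nat \<Rightarrow> 'h) \<Rightarrow> (nat \<Rightarrow> 'h)" where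
  "rep_k k \<sigma> g v = (\<lambda>i. if i < k then \<sigma> g (v i) else 0)"

end

theory Submission
  imports Defs
begin


lemma cinner_add_right: "cinner x (y + z) = cinner x y + cinner x z"
  by (metis cinner_commute cinner_add_left complex_cnj_add)

lemma cinner_scaleC_right: "cinner x (scaleC a y) = cnj a * cinner x y"
  by (metis cinner_commute cinner_scaleC_left complex_cnj_mult)

lemma scaleC_zero_right [simp]: "scaleC a (0::'a::complex_inner) = 0"
proof -
  have "scaleC a (0::'a) = scaleC a 0 + scaleC a 0"
    by (metis add.right_neutral scaleC_add_right)
  then show ?thesis by simp
qed

lemma scaleC_zero_left [simp]: "scaleC 0 (x::'a::complex_inner) = 0"
  by (metis of_real_0 scaleR_scaleC scaleR_zero_left)

lemma scaleC_minus_right: "scaleC a (- x) = - scaleC a (x::'a::complex_inner)"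
  by (metis add.right_inverse add_eq_0_iff2 scaleC_add_right scaleC_zero_right)

lemma scaleC_diff_right: "scaleC a (x - y) = scaleC a x - scaleC a (y::'a::complex_inner)"
  by (metis diff_conv_add_uminus scaleC_add_right scaleC_minus_right)

lemma scaleC_minus_left: "scaleC (- a) x = - scaleC a (x::'a::complex_inner)"
  by (metis add.right_inverse add_eq_0_iff2 scaleC_add_left scaleC_zero_left)

lemma scaleC_diff_left: "scaleC (a - b) x = scaleC a x - scaleC b (x::'a::complex_inner)"
  by (metis diff_conv_add_uminus scaleC_add_left scaleC_minus_left)

lemma cinner_zero_left [simp]: "cinner 0 y = 0"
  by (metis add_cancel_right_right cinner_add_left)

lemma cinner_zero_right [simp]: "cinner x 0 = 0"
  by (metis cinner_commute cinner_zero_left complex_cnj_zero)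

lemma cinner_minus_left: "cinner (- x) y = - cinner x y"
  by (metis add.right_inverse add_eq_0_iff2 cinner_add_left cinner_zero_left)

lemma cinner_minus_right: "cinner x (- y) = - cinner x y"
  by (metis cinner_commute cinner_minus_left complex_cnj_minus)

lemma cinner_diff_left: "cinner (x - y) z = cinner x z - cinner y z"
  by (metis diff_conv_add_uminus cinner_add_left cinner_minus_left)

lemma cinner_diff_right: "cinner x (y - z) = cinner x y - cinner x z"
  by (metis diff_conv_add_uminus cinner_add_right cinner_minus_right)

lemma cinner_sum_left: "cinner (\<Sum>i\<in>A. f i) y = (\<Sum>i\<in>A. cinner (f i) y)"
  by (induction A rule: infinite_finite_induct) (auto simp: cinner_add_left)

lemma cinner_sum_right: "cinner x (\<Sum>i\<in>A. f i) = (\<Sum>i\<in>A. cinner x (f i))"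
  by (induction A rule: infinite_finite_induct) (auto simp: cinner_add_right)

lemma scaleC_sum_right: "scaleC a (\<Sum>i\<in>A. f i) = (\<Sum>i\<in>A. scaleC a (f i :: 'a::complex_inner))"
  by (induction A rule: infinite_finite_induct) (auto simp: scaleC_add_right)

lemma scaleC_sum_left: "scaleC (\<Sum>i\<in>A. c i) x = (\<Sum>i\<in>A. scaleC (c i) (x :: 'a::complex_inner))"
  by (induction A rule: infinite_finite_induct) (auto simp: scaleC_add_left)

lemma cinner_self: "cinner x x = complex_of_real ((norm x)\<^sup>2)"
proof -
  have "cinner x x = cnj (cinner x x)" using cinner_commute by metis
  then have "Im (cinner x x) = 0" by (metis Reals_cnj_iff complex_is_Real_iff)
  moreover have "Re (cinner x x) = (norm x)\<^sup>2"
    by (metis inner_cinner power2_norm_eq_inner)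
  ultimately show ?thesis by (simp add: complex_eq_iff)
qed

lemma cinner_self_eq_0: "cinner x x = 0 \<longleftrightarrow> x = 0"
  by (simp add: cinner_self)

lemma norm_scaleC: "norm (scaleC a x) = cmod a * norm (x::'a::complex_inner)"
proof -
  have "cinner (scaleC a x) (scaleC a x) = a * cnj a * cinner x x"
    by (simp add: cinner_scaleC_left cinner_scaleC_right mult.assoc)
  also have "\<dots> = complex_of_real ((cmod a * norm x)\<^sup>2)"
  proof -
    have "a * cnj a = complex_of_real ((cmod a)\<^sup>2)" using complex_norm_square[of a] by simp
    then show ?thesis by (simp add: cinner_self power_mult_distrib)
  qed
  finally have "(norm (scaleC a x))\<^sup>2 = (cmod a * norm x)\<^sup>2"
    unfolding cinner_self using of_real_eq_iff by blast
  then show ?thesis by (simp add: power2_eq_iff_nonneg)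
qed

lemma scaleC_scaleR_comm: "scaleC a (scaleR r x) = scaleR r (scaleC a (x::'a::complex_inner))"
  by (simp add: scaleR_scaleC scaleC_scaleC mult.commute)

lemma cinner_CS: "cmod (cinner x y) \<le> norm x * norm y"
proof (cases "cinner x y = 0")
  case True then show ?thesis by simp
next
  case False
  define c where "c = cinner x y"
  define u where "u = scaleC (cnj c / complex_of_real (cmod c)) x"
  have "cinner u y = cnj c / complex_of_real (cmod c) * c"
    by (simp add: u_def cinner_scaleC_left c_def)
  also have "\<dots> = (c * cnj c) / complex_of_real (cmod c)" by simp
  also have "\<dots> = complex_of_real (cmod c)"
    using False unfolding c_def complex_norm_square[symmetric]
    by (simp add: power2_eq_square)
  finally have "inner u y = cmod c" by (simp add: inner_cinner)
  moreover have "inner u y \<le> norm u * norm y" by (rule norm_cauchy_schwarz)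
  moreover have "norm u = norm x"
    using False unfolding u_def c_def by (simp add: norm_scaleC norm_divide)
  ultimately show ?thesis unfolding c_def by simp
qed

lemma bounded_linear_scaleC: "bounded_linear (scaleC a :: 'a::complex_inner \<Rightarrow> 'a)"
  by (rule bounded_linear_intro[where K="cmod a"])
     (auto simp: scaleC_add_right scaleC_scaleR_comm norm_scaleC mult.commute)

lemma cinner_scaleR_left: "cinner (scaleR r x) y = scaleR r (cinner x y)"
  by (simp add: scaleR_scaleC[of r x] cinner_scaleC_left scaleR_conv_of_real)

lemma cinner_scaleR_right: "cinner x (scaleR r y) = scaleR r (cinner x y)"
  by (simp add: scaleR_scaleC[of r y] cinner_scaleC_right scaleR_conv_of_real)

lemma bounded_linear_cinner_left: "bounded_linear (\<lambda>x. cinner x y)"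
  by (rule bounded_linear_intro[where K="norm y"])
     (auto simp: cinner_add_left cinner_scaleR_left cinner_CS)

lemma bounded_linear_cinner_right: "bounded_linear (\<lambda>y. cinner x y)"
proof (rule bounded_linear_intro[where K="norm x"])
  show "cmod (cinner x y) \<le> norm y * norm x" for y
    using cinner_CS[of x y] by (simp add: mult.commute)
qed (auto simp: cinner_add_right cinner_scaleR_right)

lemma cinner_ext_zero: "(\<And>y. cinner x y = 0) \<Longrightarrow> x = 0"
  using cinner_self_eq_0 by blast

lemma clinear_add: "clinear T \<Longrightarrow> T (x + y) = T x + T y"
  by (simp add: clinear_def)
lemma clinear_scaleC: "clinear T \<Longrightarrow> T (scaleC a x) = scaleC a (T x)"
  by (simp add: clinear_def)
lemma clinear_zero: "clinear T \<Longrightarrow> T 0 = 0"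
  by (metis clinear_scaleC scaleC_zero_left)
lemma clinear_minus: "clinear T \<Longrightarrow> T (- x) = - T x"
proof -
  assume T: "clinear T"
  have "T (- x) + T x = 0" using clinear_add[OF T, of "- x" x] clinear_zero[OF T] by simp
  then show ?thesis by (simp add: add_eq_0_iff2)
qed
lemma clinear_diff: "clinear T \<Longrightarrow> T (x - y) = T x - T y"
  by (metis diff_conv_add_uminus clinear_add clinear_minus)
lemma clinear_sum: "clinear T \<Longrightarrow> T (\<Sum>i\<in>A. f i) = (\<Sum>i\<in>A. T (f i))"
  by (induction A rule: infinite_finite_induct) (auto simp: clinear_add clinear_zero)

lemma bounded_clinear_op_bounded_linear:
  assumes "bounded_clinear_op T" shows "bounded_linear T"
proof -
  from assms obtain K where T: "clinear T" "\<And>x. norm (T x) \<le> norm x * K"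
    unfolding bounded_clinear_op_def by blast
  show ?thesis
    by (rule bounded_linear_intro[where K=K])
       (auto simp: T clinear_add scaleR_scaleC clinear_scaleC)
qed

lemma unitary_clinear: "unitary_op U \<Longrightarrow> clinear U"
  by (simp add: unitary_op_def)

lemma unitary_cinner: "unitary_op U \<Longrightarrow> cinner (U x) (U y) = cinner x y"
  by (simp add: unitary_op_def)

lemma unitary_norm: "unitary_op U \<Longrightarrow> norm (U x) = norm x"
proof -
  assume U: "unitary_op U"
  have "complex_of_real ((norm (U x))\<^sup>2) = complex_of_real ((norm x)\<^sup>2)"
    using unitary_cinner[OF U, of x x] by (simp add: cinner_self)
  then have "(norm (U x))\<^sup>2 = (norm x)\<^sup>2" using of_real_eq_iff by blast
  then show ?thesis by (simp add: power2_eq_iff_nonneg)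
qed

lemma unitary_inj: "unitary_op U \<Longrightarrow> inj U"
proof (rule injI)
  fix x y assume U: "unitary_op U" and e: "U x = U y"
  have "U (x - y) = 0" using e clinear_diff[OF unitary_clinear[OF U]] by simp
  then have "norm (x - y) = 0" using unitary_norm[OF U, of "x - y"] by simp
  then show "x = y" by simp
qed

lemma unitary_bounded: "unitary_op U \<Longrightarrow> bounded_clinear_op U"
  unfolding bounded_clinear_op_def
  by (metis unitary_clinear unitary_norm mult.right_neutral order_refl)

lemma unitary_bounded_linear: "unitary_op U \<Longrightarrow> bounded_linear U"
  by (simp add: bounded_clinear_op_bounded_linear unitary_bounded)

lemma unitary_adj: "unitary_op U \<Longrightarrow> cinner (U x) y = cinner x (inv_into UNIV U y)"
  by (metis surj_f_inv_f unitary_cinner unitary_op_def)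

lemma unitary_inv_cancel: "unitary_op U \<Longrightarrow> U (inv_into UNIV U y) = y"
  by (metis surj_f_inv_f unitary_op_def)

lemma unitary_cancel_inv: "unitary_op U \<Longrightarrow> inv_into UNIV U (U y) = y"
  by (meson inv_f_f unitary_inj)




lemma infsum_bl:
  assumes "bounded_linear h" "f summable_on A"
  shows "infsum (\<lambda>x. h (f x)) A = h (infsum f A)"
  using has_sum_bounded_linear[OF assms(1) has_sum_infsum[OF assms(2)]] infsumI by blast

lemma summable_bl:
  assumes "bounded_linear h" "f summable_on A"
  shows "(\<lambda>x. h (f x)) summable_on A"
  using summable_on_bounded_linear[OF assms] .

lemma infsum_scaleC:
  fixes f :: "_ \<Rightarrow> 'h::complex_inner"
  assumes "f summable_on A"
  shows "infsum (\<lambda>x. scaleC a (f x)) A = scaleC a (infsum f A)"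
  using infsum_bl[OF bounded_linear_scaleC assms] .

lemma summable_scaleC:
  fixes f :: "_ \<Rightarrow> 'h::complex_inner"
  assumes "f summable_on A"
  shows "(\<lambda>x. scaleC a (f x)) summable_on A"
  using summable_bl[OF bounded_linear_scaleC assms] .

lemma summable_on_diff':
  fixes f g :: "'a \<Rightarrow> 'b::real_normed_vector"
  assumes "f summable_on A" "g summable_on A"
  shows "(\<lambda>x. f x - g x) summable_on A"
  using summable_on_add[OF assms(1) summable_on_uminus[THEN iffD2, OF assms(2)]] by simp

lemma infsum_diff':
  fixes f g :: "'a \<Rightarrow> 'b::real_normed_vector"
  assumes "f summable_on A" "g summable_on A"
  shows "infsum (\<lambda>x. f x - g x) A = infsum f A - infsum g A"
  using infsum_add[OF assms(1) summable_on_uminus[THEN iffD2, OF assms(2)]] infsum_uminus[of g A] by simp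

lemma summable_on_sum':
  fixes f :: "'i \<Rightarrow> 'a \<Rightarrow> 'b::real_normed_vector"
  assumes "\<And>i. i \<in> S \<Longrightarrow> f i summable_on A"
  shows "(\<lambda>x. \<Sum>i\<in>S. f i x) summable_on A"
  using assms
proof (induction S rule: infinite_finite_induct)
  case (insert i S)
  then show ?case by (simp add: summable_on_add)
qed auto

lemma infsum_sum':
  fixes f :: "'i \<Rightarrow> 'a \<Rightarrow> 'b::real_normed_vector"
  assumes "\<And>i. i \<in> S \<Longrightarrow> f i summable_on A"
  shows "infsum (\<lambda>x. \<Sum>i\<in>S. f i x) A = (\<Sum>i\<in>S. infsum (f i) A)"
  using assms
proof (induction S rule: infinite_finite_induct)
  case (insert i S)
  then show ?case by (simp add: infsum_add summable_on_sum')
qed auto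

lemma norm_infsum_le_finite:
  fixes f :: "'a \<Rightarrow> 'b::real_normed_vector"
  assumes "f summable_on A" "\<And>F. finite F \<Longrightarrow> F \<subseteq> A \<Longrightarrow> norm (sum f F) \<le> b"
  shows "norm (infsum f A) \<le> b"
proof -
  have "((\<lambda>F. norm (sum f F)) \<longlongrightarrow> norm (infsum f A)) (finite_subsets_at_top A)"
    using has_sum_infsum[OF assms(1)] unfolding has_sum_def by (intro tendsto_norm)
  then show ?thesis
    by (rule tendsto_upperbound) (use assms(2) finite_subsets_at_top_neq_bot in auto)
qed

section \<open>Synthesis for Bessel families\<close>

lemma synth_finite:
  fixes \<phi> :: "'g \<Rightarrow> 'h::complex_inner"
  assumes bes1: "\<And>z. (\<lambda>g. (cmod (cinner z (\<phi> g)))\<^sup>2) summable_on I"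
    and bes2: "\<And>z. (\<Sum>\<^sub>\<infinity>g\<in>I. (cmod (cinner z (\<phi> g)))\<^sup>2) \<le> B * (norm z)\<^sup>2"
    and B: "0 \<le> B" and F: "finite F" "F \<subseteq> I"
  shows "norm (\<Sum>g\<in>F. scaleC (c g) (\<phi> g)) \<le> sqrt B * sqrt (\<Sum>g\<in>F. (cmod (c g))\<^sup>2)"
proof -
  define s where "s = (\<Sum>g\<in>F. scaleC (c g) (\<phi> g))"
  have "(norm s)\<^sup>2 = Re (cinner s s)" by (simp add: cinner_self)
  also have "cinner s s = (\<Sum>g\<in>F. c g * cinner (\<phi> g) s)"
    by (subst (1) s_def) (simp add: cinner_sum_left cinner_scaleC_left)
  also have "Re \<dots> \<le> (\<Sum>g\<in>F. \<bar>cmod (c g)\<bar> * \<bar>cmod (cinner s (\<phi> g))\<bar>)"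
  proof -
    have "Re (\<Sum>g\<in>F. c g * cinner (\<phi> g) s) \<le> cmod (\<Sum>g\<in>F. c g * cinner (\<phi> g) s)"
      by (rule complex_Re_le_cmod)
    also have "\<dots> \<le> (\<Sum>g\<in>F. cmod (c g * cinner (\<phi> g) s))" by (rule norm_sum)
    also have "\<dots> = (\<Sum>g\<in>F. \<bar>cmod (c g)\<bar> * \<bar>cmod (cinner s (\<phi> g))\<bar>)"
      by (intro sum.cong refl) (metis abs_norm_cancel cinner_commute complex_mod_cnj norm_mult)
    finally show ?thesis .
  qed
  also have "\<dots> \<le> L2_set (\<lambda>g. cmod (c g)) F * L2_set (\<lambda>g. cmod (cinner s (\<phi> g))) F"
    by (rule L2_set_mult_ineq)
  also have "L2_set (\<lambda>g. cmod (cinner s (\<phi> g))) F \<le> sqrt (B * (norm s)\<^sup>2)"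
  proof -
    have "(\<Sum>g\<in>F. (cmod (cinner s (\<phi> g)))\<^sup>2) \<le> (\<Sum>\<^sub>\<infinity>g\<in>I. (cmod (cinner s (\<phi> g)))\<^sup>2)"
      by (rule finite_sum_le_infsum[OF bes1 F]) auto
    also have "\<dots> \<le> B * (norm s)\<^sup>2" by (rule bes2)
    finally show ?thesis unfolding L2_set_def by simp
  qed
  then have "L2_set (\<lambda>g. cmod (c g)) F * L2_set (\<lambda>g. cmod (cinner s (\<phi> g))) F
      \<le> L2_set (\<lambda>g. cmod (c g)) F * sqrt (B * (norm s)\<^sup>2)"
    by (intro mult_left_mono) auto
  finally have 1: "(norm s)\<^sup>2 \<le> L2_set (\<lambda>g. cmod (c g)) F * sqrt (B * (norm s)\<^sup>2)" .
  have "sqrt (B * (norm s)\<^sup>2) = sqrt B * norm s"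
    by (simp add: real_sqrt_mult)
  with 1 have 2: "norm s * norm s \<le> (L2_set (\<lambda>g. cmod (c g)) F * sqrt B) * norm s"
    by (simp only: power2_eq_square mult.assoc)
  have "norm s \<le> L2_set (\<lambda>g. cmod (c g)) F * sqrt B"
  proof (cases "norm s = 0")
    case True then show ?thesis using B by simp
  next
    case False then have "norm s > 0" by simp
    with 2 show ?thesis by simp
  qed
  then show ?thesis unfolding s_def L2_set_def by (simp add: mult.commute)
qed

lemma synth_summable:
  fixes \<phi> :: "'g \<Rightarrow> 'h::{complex_inner,complete_space}"
  assumes bes1: "\<And>z. (\<lambda>g. (cmod (cinner z (\<phi> g)))\<^sup>2) summable_on I"
    and bes2: "\<And>z. (\<Sum>\<^sub>\<infinity>g\<in>I. (cmod (cinner z (\<phi> g)))\<^sup>2) \<le> B * (norm z)\<^sup>2"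
    and B: "0 \<le> B"
    and c: "(\<lambda>g. (cmod (c g))\<^sup>2) summable_on I"
  shows "(\<lambda>g. scaleC (c g) (\<phi> g)) summable_on I"
proof -
  define f where "f g = scaleC (c g) (\<phi> g)" for g
  define S where "S = (\<Sum>\<^sub>\<infinity>g\<in>I. (cmod (c g))\<^sup>2)"
  have tail: "\<exists>F0. finite F0 \<and> F0 \<subseteq> I \<and> (\<forall>F. finite F \<and> F \<subseteq> I - F0 \<longrightarrow> (\<Sum>g\<in>F. (cmod (c g))\<^sup>2) \<le> d)"
    if "d > 0" for d
  proof -
    obtain F0 where F0: "finite F0" "F0 \<subseteq> I" "dist (\<Sum>g\<in>F0. (cmod (c g))\<^sup>2) S \<le> d"
      using infsum_finite_approximation[OF c \<open>d > 0\<close>] unfolding S_def by blast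
    have "(\<Sum>g\<in>F. (cmod (c g))\<^sup>2) \<le> d" if "finite F" "F \<subseteq> I - F0" for F
    proof -
      have "(\<Sum>g\<in>F \<union> F0. (cmod (c g))\<^sup>2) \<le> S"
        unfolding S_def by (rule finite_sum_le_infsum[OF c]) (use that F0 in auto)
      moreover have "(\<Sum>g\<in>F \<union> F0. (cmod (c g))\<^sup>2) = (\<Sum>g\<in>F. (cmod (c g))\<^sup>2) + (\<Sum>g\<in>F0. (cmod (c g))\<^sup>2)"
        by (rule sum.union_disjoint) (use that F0 in auto)
      ultimately show ?thesis using F0(3) unfolding dist_real_def by linarith
    qed
    with F0 show ?thesis by blast
  qed
  have "\<exists>P. eventually P (finite_subsets_at_top I) \<and> (\<forall>F F'. P F \<and> P F' \<longrightarrow> dist (sum f F) (sum f F') < e)"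
    if "e > 0" for e
  proof -
    define d where "d = (e / (2 * (sqrt B + 1)))\<^sup>2"
    have "0 < sqrt B + 1" using B by (simp add: add_nonneg_pos)
    then have "2 * (sqrt B + 1) > 0" by simp
    then have "d > 0" using \<open>e > 0\<close> unfolding d_def by simp
    from tail[OF this] obtain F0 where F0: "finite F0" "F0 \<subseteq> I"
      and F0': "\<forall>F. finite F \<and> F \<subseteq> I - F0 \<longrightarrow> (\<Sum>g\<in>F. (cmod (c g))\<^sup>2) \<le> d"
      by blast
    define P where "P F \<longleftrightarrow> finite F \<and> F0 \<subseteq> F \<and> F \<subseteq> I" for F
    have ev: "eventually P (finite_subsets_at_top I)"
      unfolding eventually_finite_subsets_at_top P_def using F0 by (intro exI[of _ F0]) auto
    have small: "norm (sum f D) \<le> sqrt B * (e / (2 * (sqrt B + 1)))" if "finite D" "D \<subseteq> I - F0" for D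
    proof -
      have "norm (sum f D) \<le> sqrt B * sqrt (\<Sum>g\<in>D. (cmod (c g))\<^sup>2)"
        unfolding f_def by (rule synth_finite[OF bes1 bes2 B]) (use that in auto)
      also have "sqrt (\<Sum>g\<in>D. (cmod (c g))\<^sup>2) \<le> sqrt d"
        using F0'[rule_format, OF conjI[OF that]] by simp
      also have "sqrt d = e / (2 * (sqrt B + 1))"
        unfolding d_def using \<open>e > 0\<close> B by simp
      finally show ?thesis by (simp add: mult_left_mono B)
    qed
    have "dist (sum f F) (sum f F') < e" if "P F" "P F'" for F F'
    proof -
      have fin: "finite F" "finite F'" using that unfolding P_def by auto
      have "sum f F = sum f (F - F') + sum f (F \<inter> F')"
        using fin by (metis add.commute sum.Int_Diff)
      moreover have "sum f F' = sum f (F' - F) + sum f (F \<inter> F')"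
        using fin by (metis add.commute inf_commute sum.Int_Diff)
      ultimately have "sum f F - sum f F' = sum f (F - F') - sum f (F' - F)" by simp
      then have "dist (sum f F) (sum f F') \<le> norm (sum f (F - F')) + norm (sum f (F' - F))"
        by (simp add: dist_norm norm_triangle_ineq4)
      also have "\<dots> \<le> sqrt B * (e / (2 * (sqrt B + 1))) + sqrt B * (e / (2 * (sqrt B + 1)))"
        by (intro add_mono small) (use that fin in \<open>auto simp: P_def\<close>)
      also have "\<dots> = e * (sqrt B / (sqrt B + 1))"
      proof -
        have "sqrt B + 1 > 0" using B by (simp add: add_nonneg_pos)
        then show ?thesis by (simp add: divide_simps)
      qed
      also have "\<dots> < e * 1"
      proof -
        have "0 < sqrt B + 1" using B by (simp add: add_nonneg_pos)
        then have "sqrt B / (sqrt B + 1) < 1" by (simp add: divide_less_eq_1_pos)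
        then show ?thesis using \<open>e > 0\<close> by (intro mult_strict_left_mono) auto
      qed
      finally show ?thesis by simp
    qed
    with ev show ?thesis by blast
  qed
  then have "cauchy_filter (filtermap (sum f) (finite_subsets_at_top I))"
    by (simp add: cauchy_filter_metric_filtermap)
  moreover have "complete (UNIV::'h set)"
    by (meson Cauchy_convergent UNIV_I complete_def convergent_def)
  ultimately obtain L' where "(sum f \<longlongrightarrow> L') (finite_subsets_at_top I)"
    using complete_uniform[where S=UNIV] by (force simp add: filterlim_def)
  then show ?thesis
    unfolding f_def using summable_on_def has_sum_def by blast
qed

lemma synth_norm:
  fixes \<phi> :: "'g \<Rightarrow> 'h::{complex_inner,complete_space}"
  assumes bes1: "\<And>z. (\<lambda>g. (cmod (cinner z (\<phi> g)))\<^sup>2) summable_on I"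
    and bes2: "\<And>z. (\<Sum>\<^sub>\<infinity>g\<in>I. (cmod (cinner z (\<phi> g)))\<^sup>2) \<le> B * (norm z)\<^sup>2"
    and B: "0 \<le> B"
    and c: "(\<lambda>g. (cmod (c g))\<^sup>2) summable_on I"
  shows "norm (\<Sum>\<^sub>\<infinity>g\<in>I. scaleC (c g) (\<phi> g)) \<le> sqrt B * sqrt (\<Sum>\<^sub>\<infinity>g\<in>I. (cmod (c g))\<^sup>2)"
proof (rule norm_infsum_le_finite[OF synth_summable[OF bes1 bes2 B c]])
  fix F assume F: "finite F" "F \<subseteq> I"
  have "norm (\<Sum>g\<in>F. scaleC (c g) (\<phi> g)) \<le> sqrt B * sqrt (\<Sum>g\<in>F. (cmod (c g))\<^sup>2)"
    by (rule synth_finite[OF bes1 bes2 B F])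
  also have "\<dots> \<le> sqrt B * sqrt (\<Sum>\<^sub>\<infinity>g\<in>I. (cmod (c g))\<^sup>2)"
    by (intro mult_left_mono real_sqrt_le_mono finite_sum_le_infsum[OF c F]) (auto simp: B)
  finally show "norm (\<Sum>g\<in>F. scaleC (c g) (\<phi> g)) \<le> sqrt B * sqrt (\<Sum>\<^sub>\<infinity>g\<in>I. (cmod (c g))\<^sup>2)" .
qed




section \<open>Projective representations\<close>

definition pmu :: "('g, 'b) monoid_scheme \<Rightarrow> ('g \<Rightarrow> 'h::complex_inner \<Rightarrow> 'h) \<Rightarrow> 'g \<Rightarrow> 'g \<Rightarrow> complex" where
  "pmu G \<pi> = (SOME \<mu>. \<forall>g\<in>carrier G. \<forall>h\<in>carrier G.
        cmod (\<mu> g h) = 1 \<and> \<pi> g \<circ> \<pi> h = (\<lambda>x. scaleC (\<mu> g h) (\<pi> (g \<otimes>\<^bsub>G\<^esub> h) x)))"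

lemma pmu_spec:
  assumes "proj_unitary_rep G \<pi>"
  shows "\<forall>g\<in>carrier G. \<forall>h\<in>carrier G.
        cmod (pmu G \<pi> g h) = 1 \<and> \<pi> g \<circ> \<pi> h = (\<lambda>x. scaleC (pmu G \<pi> g h) (\<pi> (g \<otimes>\<^bsub>G\<^esub> h) x))"
proof -
  define P where "P = (\<lambda>\<mu>. \<forall>g\<in>carrier G. \<forall>h\<in>carrier G.
        cmod (\<mu> g h) = 1 \<and> \<pi> g \<circ> \<pi> h = (\<lambda>x. scaleC (\<mu> g h) (\<pi> (g \<otimes>\<^bsub>G\<^esub> h) x)))"
  have "\<exists>\<mu>. P \<mu>" using assms unfolding proj_unitary_rep_def P_def by blast
  then have "P (Eps P)" by (rule someI_ex)
  moreover have "pmu G \<pi> = Eps P" unfolding pmu_def P_def ..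
  ultimately have "P (pmu G \<pi>)" by simp
  then show ?thesis unfolding P_def .
qed

lemma pmu_norm:
  assumes "proj_unitary_rep G \<pi>" "g \<in> carrier G" "h \<in> carrier G"
  shows "cmod (pmu G \<pi> g h) = 1"
  using pmu_spec[OF assms(1)] assms(2,3) by blast

lemma pmu_mult:
  assumes "proj_unitary_rep G \<pi>" "g \<in> carrier G" "h \<in> carrier G"
  shows "\<pi> g (\<pi> h x) = scaleC (pmu G \<pi> g h) (\<pi> (g \<otimes>\<^bsub>G\<^esub> h) x)"
proof -
  have "\<pi> g \<circ> \<pi> h = (\<lambda>x. scaleC (pmu G \<pi> g h) (\<pi> (g \<otimes>\<^bsub>G\<^esub> h) x))"
    using pmu_spec[OF assms(1)] assms(2,3) by blast
  then show ?thesis by (metis comp_apply)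
qed

lemma rep_unitary:
  assumes "proj_unitary_rep G \<pi>" "g \<in> carrier G"
  shows "unitary_op (\<pi> g)"
  using assms unfolding proj_unitary_rep_def by blast

lemma cnj_mult_unit: "cmod m = 1 \<Longrightarrow> cnj m * m = 1"
  using complex_norm_square[of m] by (simp add: mult.commute)

lemma unit_nonzero: "cmod m = 1 \<Longrightarrow> m \<noteq> 0"
  by auto

lemma rep_one:
  assumes G: "group G" and R: "proj_unitary_rep G \<pi>"
  shows "\<pi> \<one>\<^bsub>G\<^esub> x = scaleC (pmu G \<pi> \<one>\<^bsub>G\<^esub> \<one>\<^bsub>G\<^esub>) x"
proof -
  interpret group G by fact
  have U: "unitary_op (\<pi> \<one>\<^bsub>G\<^esub>)" using rep_unitary[OF R] by simp
  have "\<pi> \<one>\<^bsub>G\<^esub> (\<pi> \<one>\<^bsub>G\<^esub> x) = scaleC (pmu G \<pi> \<one>\<^bsub>G\<^esub> \<one>\<^bsub>G\<^esub>) (\<pi> \<one>\<^bsub>G\<^esub> x)"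
    using pmu_mult[OF R, of "\<one>\<^bsub>G\<^esub>" "\<one>\<^bsub>G\<^esub>" x] by simp
  also have "\<dots> = \<pi> \<one>\<^bsub>G\<^esub> (scaleC (pmu G \<pi> \<one>\<^bsub>G\<^esub> \<one>\<^bsub>G\<^esub>) x)"
    by (simp add: clinear_scaleC[OF unitary_clinear[OF U]])
  finally show ?thesis using unitary_inj[OF U] by (meson injD)
qed

lemma rep_mult':
  assumes R: "proj_unitary_rep G \<pi>" "g \<in> carrier G" "h \<in> carrier G"
  shows "\<pi> (g \<otimes>\<^bsub>G\<^esub> h) x = scaleC (cnj (pmu G \<pi> g h)) (\<pi> g (\<pi> h x))"
  using pmu_mult[OF R, of x] cnj_mult_unit[OF pmu_norm[OF R]]
  by (simp add: scaleC_scaleC scaleC_one)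

definition ic :: "('g, 'b) monoid_scheme \<Rightarrow> ('g \<Rightarrow> 'h::complex_inner \<Rightarrow> 'h) \<Rightarrow> 'g \<Rightarrow> complex" where
  "ic G \<pi> g = cnj (pmu G \<pi> g (inv\<^bsub>G\<^esub> g) * pmu G \<pi> \<one>\<^bsub>G\<^esub> \<one>\<^bsub>G\<^esub>)"

lemma ic_norm:
  assumes G: "group G" and R: "proj_unitary_rep G \<pi>" and g: "g \<in> carrier G"
  shows "cmod (ic G \<pi> g) = 1"
proof -
  interpret group G by fact
  show ?thesis unfolding ic_def using pmu_norm[OF R] g by (simp add: norm_mult)
qed

lemma rep_inv_cinner:
  assumes G: "group G" and R: "proj_unitary_rep G \<pi>" and g: "g \<in> carrier G"
  shows "cinner \<xi> (\<pi> (inv\<^bsub>G\<^esub> g) x) = ic G \<pi> g * cinner (\<pi> g \<xi>) x"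
proof -
  interpret group G by fact
  have U: "unitary_op (\<pi> g)" using rep_unitary[OF R g] .
  have "cinner \<xi> (\<pi> (inv\<^bsub>G\<^esub> g) x) = cinner (\<pi> g \<xi>) (\<pi> g (\<pi> (inv\<^bsub>G\<^esub> g) x))"
    using unitary_cinner[OF U] by simp
  also have "\<pi> g (\<pi> (inv\<^bsub>G\<^esub> g) x) = scaleC (pmu G \<pi> g (inv\<^bsub>G\<^esub> g) * pmu G \<pi> \<one>\<^bsub>G\<^esub> \<one>\<^bsub>G\<^esub>) x"
    using pmu_mult[OF R g inv_closed[OF g]] rep_one[OF G R] g
    by (simp add: scaleC_scaleC)
  finally show ?thesis by (simp add: cinner_scaleC_right ic_def)
qed

lemma inv_bij: "group G \<Longrightarrow> bij_betw (\<lambda>g. inv\<^bsub>G\<^esub> g) (carrier G) (carrier G)"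
  by (rule bij_betw_byWitness[where f'="\<lambda>g. inv\<^bsub>G\<^esub> g"]) (auto simp: group.inv_inv)

lemma lmult_bij:
  assumes "group G" "s \<in> carrier G"
  shows "bij_betw (\<lambda>h. s \<otimes>\<^bsub>G\<^esub> h) (carrier G) (carrier G)"
proof -
  interpret group G by fact
  show ?thesis
    by (rule bij_betw_byWitness[where f'="\<lambda>g. inv\<^bsub>G\<^esub> s \<otimes>\<^bsub>G\<^esub> g"])
       (use assms(2) in \<open>auto simp: m_assoc[symmetric]\<close>)
qed

lemma bessel_B:
  assumes "bessel_vector G \<pi> x"
  obtains B where "0 \<le> B" "\<And>z. (\<lambda>g. (cmod (cinner z (\<pi> g x)))\<^sup>2) summable_on carrier G"
    "\<And>z. (\<Sum>\<^sub>\<infinity>g\<in>carrier G. (cmod (cinner z (\<pi> g x)))\<^sup>2) \<le> B * (norm z)\<^sup>2"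
proof -
  from assms obtain B where B: "\<forall>z. (\<lambda>g. (cmod (cinner z (\<pi> g x)))\<^sup>2) summable_on carrier G \<and>
     (\<Sum>\<^sub>\<infinity>g\<in>carrier G. (cmod (cinner z (\<pi> g x)))\<^sup>2) \<le> B * (norm z)\<^sup>2"
    unfolding bessel_vector_def by blast
  have "B * (norm z)\<^sup>2 \<le> max B 0 * (norm z)\<^sup>2" for z
    by (intro mult_right_mono) auto
  with B show ?thesis using that[of "max B 0"] by (meson max.cobounded2 order_trans)
qed

lemma bessel_inv:
  assumes G: "group G"
    and s: "\<And>z. (\<lambda>g. (cmod (cinner z (\<pi> g x)))\<^sup>2) summable_on carrier G"
    and b: "\<And>z. (\<Sum>\<^sub>\<infinity>g\<in>carrier G. (cmod (cinner z (\<pi> g x)))\<^sup>2) \<le> B * (norm z)\<^sup>2"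
  shows "(\<lambda>g. (cmod (cinner z (\<pi> (inv\<^bsub>G\<^esub> g) x)))\<^sup>2) summable_on carrier G"
    and "(\<Sum>\<^sub>\<infinity>g\<in>carrier G. (cmod (cinner z (\<pi> (inv\<^bsub>G\<^esub> g) x)))\<^sup>2) \<le> B * (norm z)\<^sup>2"
  using summable_on_reindex_bij_betw[OF inv_bij[OF G], of "\<lambda>g. (cmod (cinner z (\<pi> g x)))\<^sup>2"] s
    infsum_reindex_bij_betw[OF inv_bij[OF G], of "\<lambda>g. (cmod (cinner z (\<pi> g x)))\<^sup>2"] b
  by auto

section \<open>The operators T\<close>

definition Top :: "('g, 'b) monoid_scheme \<Rightarrow> ('g \<Rightarrow> 'h::complex_inner \<Rightarrow> 'h) \<Rightarrow> 'h \<Rightarrow> 'h \<Rightarrow> 'h \<Rightarrow> 'h" where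
  "Top G \<pi> x y z = (\<Sum>\<^sub>\<infinity>g\<in>carrier G. scaleC (cinner z (\<pi> g x)) (\<pi> g y))"

locale two_bessel =
  fixes G :: "('g, 'b) monoid_scheme" and \<pi> :: "'g \<Rightarrow> 'h::{complex_inner,complete_space} \<Rightarrow> 'h"
    and x y :: 'h and Bx By :: real
  assumes grp: "group G" and R: "proj_unitary_rep G \<pi>"
    and Bx: "0 \<le> Bx" "\<And>z. (\<lambda>g. (cmod (cinner z (\<pi> g x)))\<^sup>2) summable_on carrier G"
    "\<And>z. (\<Sum>\<^sub>\<infinity>g\<in>carrier G. (cmod (cinner z (\<pi> g x)))\<^sup>2) \<le> Bx * (norm z)\<^sup>2"
    and By: "0 \<le> By" "\<And>z. (\<lambda>g. (cmod (cinner z (\<pi> g y)))\<^sup>2) summable_on carrier G"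
    "\<And>z. (\<Sum>\<^sub>\<infinity>g\<in>carrier G. (cmod (cinner z (\<pi> g y)))\<^sup>2) \<le> By * (norm z)\<^sup>2"
begin

lemma coef_summable: "(\<lambda>g. (cmod (cinner z (\<pi> g x)))\<^sup>2) summable_on carrier G"
  by (rule Bx(2))

lemma T_summable: "(\<lambda>g. scaleC (cinner z (\<pi> g x)) (\<pi> g y)) summable_on carrier G"
  by (rule synth_summable[OF By(2,3,1) Bx(2)])

lemma T_norm: "norm (Top G \<pi> x y z) \<le> sqrt By * sqrt Bx * norm z"
proof -
  have "norm (Top G \<pi> x y z) \<le> sqrt By * sqrt (\<Sum>\<^sub>\<infinity>g\<in>carrier G. (cmod (cinner z (\<pi> g x)))\<^sup>2)"
    unfolding Top_def by (rule synth_norm[OF By(2,3,1) Bx(2)])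
  also have "\<dots> \<le> sqrt By * sqrt (Bx * (norm z)\<^sup>2)"
    by (intro mult_left_mono real_sqrt_le_mono Bx(3)) (simp add: By)
  also have "\<dots> = sqrt By * sqrt Bx * norm z" by (simp add: real_sqrt_mult)
  finally show ?thesis .
qed

lemma T_add: "Top G \<pi> x y (z1 + z2) = Top G \<pi> x y z1 + Top G \<pi> x y z2"
  unfolding Top_def
  by (simp add: cinner_add_left scaleC_add_left infsum_add[OF T_summable T_summable])

lemma T_scaleC: "Top G \<pi> x y (scaleC a z) = scaleC a (Top G \<pi> x y z)"
  unfolding Top_def
  by (simp add: cinner_scaleC_left scaleC_scaleC[symmetric] infsum_scaleC[OF T_summable])

lemma T_clinear: "clinear (Top G \<pi> x y)"
  unfolding clinear_def by (simp add: T_add T_scaleC)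

lemma T_bounded: "bounded_clinear_op (Top G \<pi> x y)"
  unfolding bounded_clinear_op_def
  using T_clinear T_norm by (metis mult.commute)

lemma T_comm:
  assumes s: "s \<in> carrier G"
  shows "Top G \<pi> x y (\<pi> s z) = \<pi> s (Top G \<pi> x y z)"
proof -
  interpret group G by (rule grp)
  have U: "unitary_op (\<pi> s)" by (rule rep_unitary[OF R s])
  have "Top G \<pi> x y (\<pi> s z) = (\<Sum>\<^sub>\<infinity>h\<in>carrier G. scaleC (cinner (\<pi> s z) (\<pi> (s \<otimes>\<^bsub>G\<^esub> h) x)) (\<pi> (s \<otimes>\<^bsub>G\<^esub> h) y))"
    unfolding Top_def
    by (rule infsum_reindex_bij_betw[OF lmult_bij[OF grp s], symmetric])
  also have "\<dots> = (\<Sum>\<^sub>\<infinity>h\<in>carrier G. \<pi> s (scaleC (cinner z (\<pi> h x)) (\<pi> h y)))"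
  proof (rule infsum_cong)
    fix h assume h: "h \<in> carrier G"
    define m where "m = pmu G \<pi> s h"
    have m: "cnj m * m = 1" "m * cnj m = 1" unfolding m_def using cnj_mult_unit[OF pmu_norm[OF R s h]]
      by (auto simp: mult.commute)
    have "cinner (\<pi> s z) (\<pi> (s \<otimes>\<^bsub>G\<^esub> h) x) = m * cinner z (\<pi> h x)"
      using rep_mult'[OF R s h, of x] unitary_cinner[OF U]
      by (simp add: cinner_scaleC_right m_def)
    moreover have "\<pi> (s \<otimes>\<^bsub>G\<^esub> h) y = scaleC (cnj m) (\<pi> s (\<pi> h y))"
      using rep_mult'[OF R s h, of y] by (simp add: m_def)
    ultimately have "scaleC (cinner (\<pi> s z) (\<pi> (s \<otimes>\<^bsub>G\<^esub> h) x)) (\<pi> (s \<otimes>\<^bsub>G\<^esub> h) y)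
        = scaleC (m * cnj m * cinner z (\<pi> h x)) (\<pi> s (\<pi> h y))"
      by (simp add: scaleC_scaleC mult.commute mult.left_commute mult.assoc)
    also have "\<dots> = \<pi> s (scaleC (cinner z (\<pi> h x)) (\<pi> h y))"
      using m by (simp add: clinear_scaleC[OF unitary_clinear[OF U]] mult.assoc)
    finally show "scaleC (cinner (\<pi> s z) (\<pi> (s \<otimes>\<^bsub>G\<^esub> h) x)) (\<pi> (s \<otimes>\<^bsub>G\<^esub> h) y)
        = \<pi> s (scaleC (cinner z (\<pi> h x)) (\<pi> h y))" .
  qed
  also have "\<dots> = \<pi> s (Top G \<pi> x y z)"
    unfolding Top_def by (rule infsum_bl[OF unitary_bounded_linear[OF U] T_summable])
  finally show ?thesis .
qed

lemma T_commutant: "Top G \<pi> x y \<in> commutant (\<pi> ` carrier G)"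
  unfolding commutant_def using T_bounded T_comm by (auto simp: fun_eq_iff)

lemma T_apply_alt:
  "Top G \<pi> x y \<xi> = (\<Sum>\<^sub>\<infinity>h\<in>carrier G. scaleC (ic G \<pi> h * cnj (cinner x (\<pi> h \<xi>))) (\<pi> (inv\<^bsub>G\<^esub> h) y))"
proof -
  interpret group G by (rule grp)
  have "Top G \<pi> x y \<xi> = (\<Sum>\<^sub>\<infinity>h\<in>carrier G. scaleC (cinner \<xi> (\<pi> (inv\<^bsub>G\<^esub> h) x)) (\<pi> (inv\<^bsub>G\<^esub> h) y))"
    unfolding Top_def
    by (rule infsum_reindex_bij_betw[OF inv_bij[OF grp], symmetric])
  also have "\<dots> = (\<Sum>\<^sub>\<infinity>h\<in>carrier G. scaleC (ic G \<pi> h * cnj (cinner x (\<pi> h \<xi>))) (\<pi> (inv\<^bsub>G\<^esub> h) y))"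
    by (rule infsum_cong) (simp add: rep_inv_cinner[OF grp R] cinner_commute[of x])
  finally show ?thesis .
qed

end

lemma T_self_zero:
  fixes \<pi> :: "'g \<Rightarrow> 'h::{complex_inner,complete_space} \<Rightarrow> 'h"
  assumes G: "group G" and R: "proj_unitary_rep G \<pi>"
    and bes: "bessel_vector G \<pi> x"
    and T0: "Top G \<pi> x x w = 0"
  shows "cinner w x = 0"
proof -
  interpret group G by fact
  obtain B where B: "0 \<le> B" "\<And>z. (\<lambda>g. (cmod (cinner z (\<pi> g x)))\<^sup>2) summable_on carrier G"
    "\<And>z. (\<Sum>\<^sub>\<infinity>g\<in>carrier G. (cmod (cinner z (\<pi> g x)))\<^sup>2) \<le> B * (norm z)\<^sup>2"
    using bessel_B[OF bes] by blast
  interpret tb: two_bessel G \<pi> x x B B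
    by unfold_locales (use G R B in auto)
  have "0 = cinner (Top G \<pi> x x w) w" using T0 by simp
  also have "\<dots> = (\<Sum>\<^sub>\<infinity>g\<in>carrier G. cinner (scaleC (cinner w (\<pi> g x)) (\<pi> g x)) w)"
    unfolding Top_def by (rule infsum_bl[OF bounded_linear_cinner_left tb.T_summable, symmetric])
  also have "\<dots> = (\<Sum>\<^sub>\<infinity>g\<in>carrier G. complex_of_real ((cmod (cinner w (\<pi> g x)))\<^sup>2))"
    by (rule infsum_cong)
       (simp add: cinner_scaleC_left cinner_commute[of "\<pi> _ x" w] flip: complex_norm_square)
  also have "\<dots> = complex_of_real (\<Sum>\<^sub>\<infinity>g\<in>carrier G. (cmod (cinner w (\<pi> g x)))\<^sup>2)"
    using has_sum_of_real[OF has_sum_infsum[OF B(2)]] infsumI by blast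
  finally have z: "(\<Sum>\<^sub>\<infinity>g\<in>carrier G. (cmod (cinner w (\<pi> g x)))\<^sup>2) = 0" by simp
  have "(\<Sum>g\<in>{\<one>\<^bsub>G\<^esub>}. (cmod (cinner w (\<pi> g x)))\<^sup>2) \<le> (\<Sum>\<^sub>\<infinity>g\<in>carrier G. (cmod (cinner w (\<pi> g x)))\<^sup>2)"
    by (rule finite_sum_le_infsum[OF B(2)]) auto
  with z have "cinner w (\<pi> \<one>\<^bsub>G\<^esub> x) = 0" by simp
  then have "cnj (pmu G \<pi> \<one>\<^bsub>G\<^esub> \<one>\<^bsub>G\<^esub>) * cinner w x = 0"
    by (simp add: rep_one[OF G R] cinner_scaleC_right)
  moreover have "cnj (pmu G \<pi> \<one>\<^bsub>G\<^esub> \<one>\<^bsub>G\<^esub>) \<noteq> 0" using pmu_norm[OF R] by fastforce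
  ultimately show ?thesis by simp
qed

lemma zero_from_dense:
  fixes w :: "'h::complex_inner"
  assumes D: "closure D = UNIV" and orth: "\<And>x. x \<in> D \<Longrightarrow> cinner w x = 0"
  shows "w = 0"
proof (rule ccontr)
  assume "w \<noteq> 0"
  then have pos: "norm w > 0" by simp
  have "w \<in> closure D" using D by simp
  then obtain x where x: "x \<in> D" "dist x w < norm w / 2"
    using pos closure_approachable[of w D] by (metis half_gt_zero)
  have "(norm w)\<^sup>2 = cmod (cinner w w - cinner w x)"
    using orth[OF x(1)] by (simp add: cinner_self norm_power)
  also have "\<dots> = cmod (cinner w (w - x))" by (simp add: cinner_diff_right)
  also have "\<dots> \<le> norm w * norm (w - x)" by (rule cinner_CS)
  also have "\<dots> \<le> norm w * (norm w / 2)"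
    using x(2) by (intro mult_left_mono) (auto simp: dist_norm norm_minus_commute)
  finally have "norm w * norm w \<le> norm w * (norm w / 2)" by (simp add: power2_eq_square)
  with pos show False by simp
qed




section \<open>Finite direct sums H^k\<close>

definition Vk :: "nat \<Rightarrow> (nat \<Rightarrow> 'h::complex_inner) set" where
  "Vk k = {v. \<forall>i\<ge>k. v i = 0}"

definition hn2 :: "nat \<Rightarrow> (nat \<Rightarrow> 'h::complex_inner) \<Rightarrow> real" where
  "hn2 k v = (\<Sum>i<k. (norm (v i))\<^sup>2)"

definition hnorm :: "nat \<Rightarrow> (nat \<Rightarrow> 'h::complex_inner) \<Rightarrow> real" where
  "hnorm k v = sqrt (hn2 k v)"

definition hip :: "nat \<Rightarrow> (nat \<Rightarrow> 'h::complex_inner) \<Rightarrow> (nat \<Rightarrow> 'h) \<Rightarrow> complex" where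
  "hip k v w = (\<Sum>i<k. cinner (v i) (w i))"

definition smul :: "complex \<Rightarrow> (nat \<Rightarrow> 'h::complex_inner) \<Rightarrow> (nat \<Rightarrow> 'h)" where
  "smul a v = (\<lambda>i. scaleC a (v i))"

lemma hn2_nonneg: "0 \<le> hn2 k v"
  unfolding hn2_def by (intro sum_nonneg) simp

lemma hnorm_nonneg: "0 \<le> hnorm k v"
  unfolding hnorm_def by (simp add: hn2_nonneg)

lemma hnorm_sq: "(hnorm k v)\<^sup>2 = hn2 k v"
  unfolding hnorm_def by (simp add: hn2_nonneg)

lemma hnorm_L2: "hnorm k v = L2_set (\<lambda>i. norm (v i)) {..<k}"
  unfolding hnorm_def hn2_def L2_set_def ..

lemma hnorm_triangle: "hnorm k (\<lambda>i. v i + w i) \<le> hnorm k v + hnorm k w"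
proof -
  have "hnorm k (\<lambda>i. v i + w i) \<le> L2_set (\<lambda>i. norm (v i) + norm (w i)) {..<k}"
    unfolding hnorm_L2 by (rule L2_set_mono) (auto simp: norm_triangle_ineq)
  also have "\<dots> \<le> hnorm k v + hnorm k w"
    unfolding hnorm_L2 by (rule L2_set_triangle_ineq)
  finally show ?thesis .
qed

lemma hnorm_diff_triangle: "hnorm k (\<lambda>i. u i - w i) \<le> hnorm k (\<lambda>i. u i - v i) + hnorm k (\<lambda>i. v i - w i)"
  using hnorm_triangle[of k "\<lambda>i. u i - v i" "\<lambda>i. v i - w i"] by simp

lemma hnorm_commute: "hnorm k (\<lambda>i. u i - w i) = hnorm k (\<lambda>i. w i - u i)"
  unfolding hnorm_def hn2_def by (simp add: norm_minus_commute)

lemma hn2_smul: "hn2 k (smul a v) = (cmod a)\<^sup>2 * hn2 k v"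
  unfolding hn2_def smul_def by (simp add: norm_scaleC power_mult_distrib sum_distrib_left)

lemma hnorm_smul: "hnorm k (smul a v) = cmod a * hnorm k v"
  unfolding hnorm_def hn2_smul by (simp add: real_sqrt_mult)

lemma component_le_hnorm: "i < k \<Longrightarrow> norm (v i) \<le> hnorm k v"
  unfolding hnorm_L2 by (rule member_le_L2_set) auto

lemma hn2_eq_0: "hn2 k v = 0 \<Longrightarrow> i < k \<Longrightarrow> v i = 0"
  using component_le_hnorm[of i k v] unfolding hnorm_def by simp

lemma hnorm_lt_iff: "0 < e \<Longrightarrow> hn2 k v < e\<^sup>2 \<longleftrightarrow> hnorm k v < e"
proof -
  assume e: "0 < e"
  then have "sqrt (e\<^sup>2) = e" by simp
  then have "hnorm k v < e \<longleftrightarrow> sqrt (hn2 k v) < sqrt (e\<^sup>2)" unfolding hnorm_def by simp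
  also have "\<dots> \<longleftrightarrow> hn2 k v < e\<^sup>2" by (rule real_sqrt_less_iff)
  finally show ?thesis by simp
qed

lemma hip_self: "hip k v v = complex_of_real (hn2 k v)"
  unfolding hip_def hn2_def by (simp add: cinner_self)

lemma hip_commute: "hip k w v = cnj (hip k v w)"
  unfolding hip_def by (simp add: cinner_commute[of "w _"])

lemma hip_add_left: "hip k (\<lambda>i. x i + y i) b = hip k x b + hip k y b"
  unfolding hip_def by (simp add: cinner_add_left sum.distrib)

lemma hip_diff_left: "hip k (\<lambda>i. x i - y i) b = hip k x b - hip k y b"
  unfolding hip_def by (simp add: cinner_diff_left sum_subtractf)

lemma hip_smul_left: "hip k (smul a x) b = a * hip k x b"
  unfolding hip_def smul_def by (simp add: cinner_scaleC_left sum_distrib_left)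

lemma hip_smul_right: "hip k x (smul a b) = cnj a * hip k x b"
  unfolding hip_def smul_def by (simp add: cinner_scaleC_right sum_distrib_left)

lemma hip_CS: "cmod (hip k v w) \<le> hnorm k v * hnorm k w"
proof -
  have "cmod (hip k v w) \<le> (\<Sum>i<k. cmod (cinner (v i) (w i)))"
    unfolding hip_def by (rule norm_sum)
  also have "\<dots> \<le> (\<Sum>i<k. \<bar>norm (v i)\<bar> * \<bar>norm (w i)\<bar>)"
    by (intro sum_mono) (simp add: cinner_CS)
  also have "\<dots> \<le> hnorm k v * hnorm k w"
    unfolding hnorm_L2 by (rule L2_set_mult_ineq)
  finally show ?thesis .
qed

lemma norm_diff_scaleC_sq:
  fixes x y :: "'h::complex_inner"
  shows "(norm (x - scaleC a y))\<^sup>2 = (norm x)\<^sup>2 - 2 * Re (cnj a * cinner x y) + (cmod a)\<^sup>2 * (norm y)\<^sup>2"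
proof -
  have r: "Re (cinner z z) = (norm z)\<^sup>2" for z :: 'h by (simp add: cinner_self)
  have "cinner (x - scaleC a y) (x - scaleC a y) =
        cinner x x - cnj a * cinner x y - a * cinner y x + a * cnj a * cinner y y"
    by (simp add: cinner_diff_left cinner_diff_right cinner_scaleC_left cinner_scaleC_right)
       (simp add: algebra_simps)
  then have 1: "Re (cinner (x - scaleC a y) (x - scaleC a y)) =
        Re (cinner x x) - Re (cnj a * cinner x y) - Re (a * cinner y x) + Re (a * cnj a * cinner y y)"
    by simp
  have 2: "Re (a * cinner y x) = Re (cnj a * cinner x y)"
    by (simp add: cinner_commute[of y x])
  have 3: "Re (a * cnj a * cinner y y) = (cmod a)\<^sup>2 * (norm y)\<^sup>2"
  proof -
    have "a * cnj a = complex_of_real ((cmod a)\<^sup>2)" using complex_norm_square[of a] by simp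
    then have "a * cnj a * cinner y y = complex_of_real ((cmod a)\<^sup>2 * (norm y)\<^sup>2)"
      by (simp add: cinner_self)
    then show ?thesis by simp
  qed
  show ?thesis using 1 2 3 unfolding r by linarith
qed

lemma hn2_diff_smul:
  "hn2 k (\<lambda>i. u i - smul a b i) = hn2 k u - 2 * Re (cnj a * hip k u b) + (cmod a)\<^sup>2 * hn2 k b"
  unfolding hn2_def hip_def smul_def
  by (simp add: norm_diff_scaleC_sq sum.distrib sum_subtractf sum_distrib_left)

lemma norm_add_sq:
  fixes x y :: "'h::complex_inner"
  shows "(norm (x + y))\<^sup>2 = (norm x)\<^sup>2 + (norm y)\<^sup>2 + 2 * Re (cinner x y)"
proof -
  have r: "Re (cinner z z) = (norm z)\<^sup>2" for z :: 'h by (simp add: cinner_self)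
  have "cinner (x + y) (x + y) = cinner x x + cinner y y + cinner x y + cinner y x"
    by (simp add: cinner_add_left cinner_add_right)
  then have "Re (cinner (x + y) (x + y)) = Re (cinner x x) + Re (cinner y y) + Re (cinner x y) + Re (cinner y x)"
    by simp
  moreover have "Re (cinner y x) = Re (cinner x y)" by (simp add: cinner_commute[of y x])
  ultimately show ?thesis unfolding r by simp
qed

lemma hn2_add: "hn2 k (\<lambda>i. x i + y i) = hn2 k x + hn2 k y + 2 * Re (hip k x y)"
  unfolding hn2_def hip_def by (simp add: norm_add_sq sum.distrib sum_distrib_left)

lemma parallelogram:
  fixes x y :: "'h::complex_inner"
  shows "(norm (x + y))\<^sup>2 + (norm (x - y))\<^sup>2 = 2 * (norm x)\<^sup>2 + 2 * (norm y)\<^sup>2"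
  by (simp add: power2_norm_eq_inner inner_add_left inner_add_right inner_diff_left inner_diff_right inner_commute[of y x])

lemma hn2_parallelogram:
  "hn2 k (\<lambda>i. x i + y i) + hn2 k (\<lambda>i. x i - y i) = 2 * hn2 k x + 2 * hn2 k y"
  unfolding hn2_def by (simp add: parallelogram sum.distrib[symmetric] sum_distrib_left)


lemma hn2_scaleR2: "hn2 k (\<lambda>i. scaleR 2 (z i)) = 4 * hn2 k z"
  unfolding hn2_def by (simp add: power_mult_distrib sum_distrib_left)

lemma hn2_commute: "hn2 k (\<lambda>i. u i - w i) = hn2 k (\<lambda>i. w i - u i)"
  unfolding hn2_def by (simp add: norm_minus_commute)

lemma hnorm_le_sqrt: "hn2 k v \<le> c \<Longrightarrow> hnorm k v \<le> sqrt c"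
  unfolding hnorm_def by simp

section \<open>Closed subspaces and orthogonal projection\<close>

locale hsub =
  fixes k :: nat and C :: "(nat \<Rightarrow> 'h::{complex_inner,complete_space}) set"
  assumes sub: "C \<subseteq> Vk k"
    and zero: "(\<lambda>i. 0) \<in> C"
    and add: "v \<in> C \<Longrightarrow> w \<in> C \<Longrightarrow> (\<lambda>i. v i + w i) \<in> C"
    and smul: "v \<in> C \<Longrightarrow> smul a v \<in> C"
    and closed: "v \<in> Vk k \<Longrightarrow> (\<And>e. e > 0 \<Longrightarrow> \<exists>b\<in>C. hnorm k (\<lambda>i. v i - b i) < e) \<Longrightarrow> v \<in> C"
begin

lemma diff: "v \<in> C \<Longrightarrow> w \<in> C \<Longrightarrow> (\<lambda>i. v i - w i) \<in> C"
proof -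
  assume v: "v \<in> C" and w: "w \<in> C"
  have "smul (-1) w = (\<lambda>i. - w i)" unfolding smul_def by (simp add: scaleC_minus_left scaleC_one)
  with smul[OF w, of "-1"] have "(\<lambda>i. - w i) \<in> C" by simp
  from add[OF v this] show ?thesis by simp
qed

lemma mid: "b \<in> C \<Longrightarrow> b' \<in> C \<Longrightarrow> (\<lambda>i. scaleR (1/2) (b i + b' i)) \<in> C"
proof -
  assume "b \<in> C" "b' \<in> C"
  then have "smul (complex_of_real (1/2)) (\<lambda>i. b i + b' i) \<in> C" by (intro smul add)
  moreover have "smul (complex_of_real (1/2)) (\<lambda>i. b i + b' i) = (\<lambda>i. scaleR (1/2) (b i + b' i))"
    unfolding smul_def by (simp add: scaleR_scaleC)
  ultimately show ?thesis by simp
qed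

lemma in_Vk: "v \<in> C \<Longrightarrow> i \<ge> k \<Longrightarrow> v i = 0"
  using sub unfolding Vk_def by blast

lemma proj_exists:
  assumes v: "v \<in> Vk k"
  shows "\<exists>p\<in>C. \<forall>b\<in>C. hip k (\<lambda>i. v i - p i) b = 0"
proof -
  define D where "D = (\<lambda>b. hnorm k (\<lambda>i. v i - b i)) ` C"
  define d where "d = Inf D"
  have Dne: "D \<noteq> {}" using zero by (auto simp: D_def)
  have Dbdd: "bdd_below D" unfolding D_def by (rule bdd_belowI[where m=0]) (auto simp: hnorm_nonneg)
  have d_le: "d \<le> hnorm k (\<lambda>i. v i - b i)" if "b \<in> C" for b
    unfolding d_def by (rule cInf_lower[OF _ Dbdd]) (use that in \<open>auto simp: D_def\<close>)
  have d0: "0 \<le> d"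
    unfolding d_def by (rule cInf_greatest[OF Dne]) (auto simp: D_def hnorm_nonneg)
  have d2_le: "d\<^sup>2 \<le> hn2 k (\<lambda>i. v i - b i)" if "b \<in> C" for b
  proof -
    have "d\<^sup>2 \<le> (hnorm k (\<lambda>i. v i - b i))\<^sup>2" using d_le[OF that] d0 by (intro power_mono) auto
    then show ?thesis by (simp add: hnorm_sq)
  qed
  define eps :: "nat \<Rightarrow> real" where "eps n = inverse (real (Suc n))" for n
  have eps_pos: "eps n > 0" for n unfolding eps_def by simp
  have eps_mono: "n \<le> m \<Longrightarrow> eps m \<le> eps n" for n m
    unfolding eps_def by (simp add: le_imp_inverse_le)
  have "\<exists>b\<in>C. hn2 k (\<lambda>i. v i - b i) < d\<^sup>2 + eps n" for n
  proof -
    have "sqrt (d\<^sup>2) < sqrt (d\<^sup>2 + eps n)"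
      by (rule real_sqrt_less_mono) (use eps_pos[of n] in simp)
    then have "d < sqrt (d\<^sup>2 + eps n)" using d0 by simp
    then have "Inf D < sqrt (d\<^sup>2 + eps n)" unfolding d_def .
    then obtain x where "x \<in> D" "x < sqrt (d\<^sup>2 + eps n)" using cInf_less_iff[OF Dne Dbdd] by blast
    then obtain b where b: "b \<in> C" "hnorm k (\<lambda>i. v i - b i) < sqrt (d\<^sup>2 + eps n)" unfolding D_def by blast
    have "hn2 k (\<lambda>i. v i - b i) < d\<^sup>2 + eps n"
      using b(2) unfolding hnorm_def by (simp only: real_sqrt_less_iff)
    with b(1) show ?thesis by blast
  qed
  then have ex: "\<forall>n. \<exists>b. b \<in> C \<and> hn2 k (\<lambda>i. v i - b i) < d\<^sup>2 + eps n" by blast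
  obtain bs where bsall: "\<forall>n. bs n \<in> C \<and> hn2 k (\<lambda>i. v i - bs n i) < d\<^sup>2 + eps n"
    using choice[OF ex] by blast
  then have bsC: "\<And>n. bs n \<in> C" and bs: "\<And>n. hn2 k (\<lambda>i. v i - bs n i) < d\<^sup>2 + eps n"
    by auto
  have key: "hn2 k (\<lambda>i. b i - b' i) \<le> 2 * hn2 k (\<lambda>i. v i - b i) + 2 * hn2 k (\<lambda>i. v i - b' i) - 4 * d\<^sup>2"
    if b: "b \<in> C" "b' \<in> C" for b b'
  proof -
    define m where "m = (\<lambda>i. scaleR (1/2) (b i + b' i))"
    have mC: "m \<in> C" unfolding m_def by (rule mid[OF b])
    have "hn2 k (\<lambda>i. (v i - b i) + (v i - b' i)) + hn2 k (\<lambda>i. (v i - b i) - (v i - b' i))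
        = 2 * hn2 k (\<lambda>i. v i - b i) + 2 * hn2 k (\<lambda>i. v i - b' i)"
      by (rule hn2_parallelogram)
    moreover have "(\<lambda>i. (v i - b i) + (v i - b' i)) = (\<lambda>i. scaleR 2 (v i - m i))"
      unfolding m_def by (simp add: algebra_simps scaleR_2)
    moreover have "(\<lambda>i. (v i - b i) - (v i - b' i)) = (\<lambda>i. b' i - b i)"
      by simp
    ultimately have "4 * hn2 k (\<lambda>i. v i - m i) + hn2 k (\<lambda>i. b i - b' i)
        = 2 * hn2 k (\<lambda>i. v i - b i) + 2 * hn2 k (\<lambda>i. v i - b' i)"
      by (simp add: hn2_scaleR2 hn2_commute[of k b'])
    moreover have "d\<^sup>2 \<le> hn2 k (\<lambda>i. v i - m i)" by (rule d2_le[OF mC])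
    ultimately show ?thesis by linarith
  qed
  have cb: "hn2 k (\<lambda>i. bs m i - bs n i) \<le> 4 * eps n" if "n \<le> m" for n m
  proof -
    have "hn2 k (\<lambda>i. bs m i - bs n i) \<le> 2 * hn2 k (\<lambda>i. v i - bs m i) + 2 * hn2 k (\<lambda>i. v i - bs n i) - 4 * d\<^sup>2"
      by (rule key[OF bsC bsC])
    also have "\<dots> \<le> 2 * (d\<^sup>2 + eps m) + 2 * (d\<^sup>2 + eps n) - 4 * d\<^sup>2"
      using bs[of m] bs[of n] by simp
    also have "\<dots> \<le> 4 * eps n" using eps_mono[OF that] by (simp add: algebra_simps)
    finally show ?thesis .
  qed
  have cb': "hn2 k (\<lambda>i. bs m i - bs n i) \<le> 4 * eps N" if "N \<le> n" "N \<le> m" for N n m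
  proof (cases "n \<le> m")
    case True
    then show ?thesis using cb[OF True] eps_mono[OF that(1)] by linarith
  next
    case False
    then have "hn2 k (\<lambda>i. bs n i - bs m i) \<le> 4 * eps m" using cb by simp
    then show ?thesis using eps_mono[OF that(2)] hn2_commute[of k "bs m" "bs n"] by linarith
  qed
  have small: "\<exists>N. 4 * eps N < e" if "e > 0" for e
  proof -
    obtain N where "inverse (real (Suc N)) < e / 4" using reals_Archimedean[of "e/4"] \<open>e > 0\<close> by auto
    then show ?thesis unfolding eps_def by (intro exI[of _ N]) linarith
  qed
  have cauchy: "Cauchy (\<lambda>n. bs n i)" if "i < k" for i
  proof (rule metric_CauchyI)
    fix e :: real assume "e > 0"
    then obtain N where N: "4 * eps N < e\<^sup>2" using small[of "e\<^sup>2"] by auto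
    have "dist (bs m i) (bs n i) < e" if "N \<le> m" "N \<le> n" for m n
    proof -
      have "dist (bs m i) (bs n i) \<le> hnorm k (\<lambda>i. bs m i - bs n i)"
        unfolding dist_norm using component_le_hnorm[OF \<open>i < k\<close>, of "\<lambda>i. bs m i - bs n i"] by simp
      also have "\<dots> < e"
        using cb'[OF that(2) that(1)] N hnorm_lt_iff[OF \<open>e > 0\<close>] by (meson le_less_trans)
      finally show ?thesis .
    qed
    then show "\<exists>M. \<forall>m\<ge>M. \<forall>n\<ge>M. dist (bs m i) (bs n i) < e" by blast
  qed
  define p where "p i = (if i < k then lim (\<lambda>n. bs n i) else 0)" for i
  have conv: "(\<lambda>n. bs n i) \<longlonglongrightarrow> p i" if "i < k" for i
    using cauchy[OF that] that unfolding p_def by (simp add: Cauchy_convergent_iff convergent_LIMSEQ_iff)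
  have pV: "p \<in> Vk k" unfolding Vk_def p_def by simp
  have tail: "hn2 k (\<lambda>i. p i - bs n i) \<le> 4 * eps n" for n
  proof -
    have "(\<lambda>m. hn2 k (\<lambda>i. bs m i - bs n i)) \<longlonglongrightarrow> hn2 k (\<lambda>i. p i - bs n i)"
      unfolding hn2_def by (intro tendsto_sum tendsto_power tendsto_norm tendsto_diff conv tendsto_const) auto
    moreover have "eventually (\<lambda>m. hn2 k (\<lambda>i. bs m i - bs n i) \<le> 4 * eps n) sequentially"
      using cb by (auto simp: eventually_sequentially)
    ultimately show ?thesis by (rule tendsto_upperbound) simp
  qed
  have pC: "p \<in> C"
  proof (rule closed[OF pV])
    fix e :: real assume "e > 0"
    then obtain N where N: "4 * eps N < e\<^sup>2" using small[of "e\<^sup>2"] by auto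
    have "hnorm k (\<lambda>i. p i - bs N i) < e"
      using tail[of N] N hnorm_lt_iff[OF \<open>e > 0\<close>] by (meson le_less_trans)
    then show "\<exists>b\<in>C. hnorm k (\<lambda>i. p i - b i) < e" using bsC by blast
  qed
  have pmin: "hnorm k (\<lambda>i. v i - p i) \<le> d"
  proof -
    have lim: "(\<lambda>n. sqrt (d\<^sup>2 + eps n) + sqrt (4 * eps n)) \<longlonglongrightarrow> sqrt (d\<^sup>2 + 0) + sqrt (4 * 0)"
      unfolding eps_def by (intro tendsto_add tendsto_real_sqrt tendsto_mult tendsto_const LIMSEQ_inverse_real_of_nat)
    have "hnorm k (\<lambda>i. v i - p i) \<le> sqrt (d\<^sup>2 + eps n) + sqrt (4 * eps n)" for n
    proof -
      have "hnorm k (\<lambda>i. v i - p i) \<le> hnorm k (\<lambda>i. v i - bs n i) + hnorm k (\<lambda>i. bs n i - p i)"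
        by (rule hnorm_diff_triangle)
      also have "hnorm k (\<lambda>i. v i - bs n i) \<le> sqrt (d\<^sup>2 + eps n)"
        using bs[of n] by (intro hnorm_le_sqrt) simp
      also have "hnorm k (\<lambda>i. bs n i - p i) \<le> sqrt (4 * eps n)"
        using tail[of n] hn2_commute[of k "bs n" p] by (intro hnorm_le_sqrt) simp
      finally show ?thesis by simp
    qed
    then have "hnorm k (\<lambda>i. v i - p i) \<le> sqrt (d\<^sup>2 + 0) + sqrt (4 * 0)"
      by (intro tendsto_lowerbound[OF lim]) auto
    then show ?thesis using d0 by simp
  qed
  have orth: "hip k (\<lambda>i. v i - p i) b = 0" if bC: "b \<in> C" for b
  proof -
    define u where "u = (\<lambda>i. v i - p i)"
    define h where "h = hip k u b"
    define N where "N = hn2 k b"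
    define t where "t = 1 / (N + 1)"
    define a where "a = complex_of_real t * h"
    have N0: "0 \<le> N" unfolding N_def by (rule hn2_nonneg)
    have t0: "0 < t" unfolding t_def using N0 by simp
    have tN: "t * N = 1 - t" unfolding t_def using N0 by (simp add: field_simps)
    have "(\<lambda>i. p i + smul a b i) \<in> C" using add[OF pC smul[OF bC]] .
    then have "d\<^sup>2 \<le> hn2 k (\<lambda>i. v i - (p i + smul a b i))" by (rule d2_le)
    moreover have "(\<lambda>i. v i - (p i + smul a b i)) = (\<lambda>i. u i - smul a b i)"
      unfolding u_def by (simp add: algebra_simps)
    moreover have "hn2 k u \<le> d\<^sup>2"
    proof -
      have "(hnorm k u)\<^sup>2 \<le> d\<^sup>2" using pmin hnorm_nonneg unfolding u_def by (intro power_mono) auto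
      then show ?thesis by (simp add: hnorm_sq)
    qed
    ultimately have le: "hn2 k u \<le> hn2 k u - 2 * Re (cnj a * h) + (cmod a)\<^sup>2 * N"
      using hn2_diff_smul[of k u a b] unfolding h_def N_def by simp
    define s where "s = (cmod h)\<^sup>2"
    have s0: "0 \<le> s" unfolding s_def by simp
    have "cnj a * h = complex_of_real (t * s)"
    proof -
      have "h * cnj h = complex_of_real ((cmod h)\<^sup>2)" using complex_norm_square[of h] by simp
      then show ?thesis unfolding a_def s_def by (simp add: mult.commute mult.left_commute)
    qed
    then have Re1: "Re (cnj a * h) = t * s" by simp
    have ca: "(cmod a)\<^sup>2 = t\<^sup>2 * s"
      unfolding a_def s_def using t0 by (simp add: norm_mult power_mult_distrib)
    from le have "0 \<le> - 2 * (t * s) + t\<^sup>2 * s * N" unfolding Re1 ca by linarith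
    also have "t\<^sup>2 * s * N = t * s * (t * N)" by (simp add: power2_eq_square)
    also have "\<dots> = t * s * (1 - t)" by (simp add: tN)
    finally have "0 \<le> - (t * s) * (1 + t)" by (simp add: algebra_simps)
    then have "t * s * (1 + t) \<le> 0" by (simp only: minus_mult_left neg_0_le_iff_le)
    moreover have "0 \<le> t * s * (1 + t)" using t0 s0 by simp
    ultimately have "t * s * (1 + t) = 0" by linarith
    then have "t * s = 0" using t0 by simp
    then have "s = 0" using t0 by simp
    then show ?thesis unfolding s_def h_def u_def by simp
  qed
  show ?thesis using pC orth by blast
qed

end




definition repW :: "nat \<Rightarrow> ('h::complex_inner \<Rightarrow> 'h) \<Rightarrow> (nat \<Rightarrow> 'h) \<Rightarrow> (nat \<Rightarrow> 'h)" where
  "repW k W v = (\<lambda>i. if i < k then W (v i) else 0)"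

lemma rep_k_repW: "rep_k k \<sigma> g = repW k (\<sigma> g)"
  unfolding rep_k_def repW_def by (simp add: fun_eq_iff)

lemma Vk_add: "v \<in> Vk k \<Longrightarrow> w \<in> Vk k \<Longrightarrow> (\<lambda>i. v i + w i) \<in> Vk k"
  unfolding Vk_def by simp
lemma Vk_diff: "v \<in> Vk k \<Longrightarrow> w \<in> Vk k \<Longrightarrow> (\<lambda>i. v i - w i) \<in> Vk k"
  unfolding Vk_def by simp
lemma Vk_smul: "v \<in> Vk k \<Longrightarrow> smul a v \<in> Vk k"
  unfolding Vk_def smul_def by simp

context hsub
begin

definition proj :: "(nat \<Rightarrow> 'h) \<Rightarrow> (nat \<Rightarrow> 'h)" where
  "proj v = (SOME p. p \<in> C \<and> (\<forall>b\<in>C. hip k (\<lambda>i. v i - p i) b = 0))"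

lemma proj: assumes "v \<in> Vk k"
  shows "proj v \<in> C" "\<And>b. b \<in> C \<Longrightarrow> hip k (\<lambda>i. v i - proj v i) b = 0"
proof -
  have "\<exists>p. p \<in> C \<and> (\<forall>b\<in>C. hip k (\<lambda>i. v i - p i) b = 0)" using proj_exists[OF assms] by blast
  then have "proj v \<in> C \<and> (\<forall>b\<in>C. hip k (\<lambda>i. v i - proj v i) b = 0)"
    unfolding proj_def by (rule someI_ex)
  then show "proj v \<in> C" "\<And>b. b \<in> C \<Longrightarrow> hip k (\<lambda>i. v i - proj v i) b = 0" by auto
qed

lemma proj_Vk: "v \<in> Vk k \<Longrightarrow> proj v \<in> Vk k"
  using proj(1) sub by blast

lemma proj_unique:
  assumes v: "v \<in> Vk k" and p: "p \<in> C" and orth: "\<And>b. b \<in> C \<Longrightarrow> hip k (\<lambda>i. v i - p i) b = 0"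
  shows "proj v = p"
proof -
  define q where "q = proj v"
  have qC: "q \<in> C" unfolding q_def by (rule proj(1)[OF v])
  define w where "w = (\<lambda>i. q i - p i)"
  have wC: "w \<in> C" unfolding w_def by (rule diff[OF qC p])
  have "w = (\<lambda>i. (v i - p i) - (v i - q i))" unfolding w_def by (simp add: fun_eq_iff)
  then have "hip k w w = hip k (\<lambda>i. v i - p i) w - hip k (\<lambda>i. v i - q i) w"
    by (metis hip_diff_left)
  also have "\<dots> = 0" using orth[OF wC] proj(2)[OF v wC] unfolding q_def by simp
  finally have "hn2 k w = 0" by (simp add: hip_self)
  then have "w i = 0" if "i < k" for i using hn2_eq_0 that by blast
  then have "q i = p i" if "i < k" for i using that unfolding w_def by simp
  moreover have "q i = p i" if "\<not> i < k" for i using in_Vk[OF qC] in_Vk[OF p] that by simp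
  ultimately show ?thesis unfolding q_def by (meson ext)
qed

lemma proj_in: "v \<in> C \<Longrightarrow> proj v = v"
  by (rule proj_unique) (use sub in \<open>auto simp: hip_def\<close>)

lemma proj_add:
  assumes "v \<in> Vk k" "w \<in> Vk k"
  shows "proj (\<lambda>i. v i + w i) = (\<lambda>i. proj v i + proj w i)"
proof (rule proj_unique)
  show "(\<lambda>i. v i + w i) \<in> Vk k" using assms by (rule Vk_add)
  show "(\<lambda>i. proj v i + proj w i) \<in> C" using proj(1)[OF assms(1)] proj(1)[OF assms(2)] by (rule add)
  fix b assume b: "b \<in> C"
  have "(\<lambda>i. v i + w i - (proj v i + proj w i)) = (\<lambda>i. (v i - proj v i) + (w i - proj w i))"
    by (simp add: algebra_simps)
  then show "hip k (\<lambda>i. v i + w i - (proj v i + proj w i)) b = 0"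
    using proj(2)[OF assms(1) b] proj(2)[OF assms(2) b] by (simp add: hip_add_left)
qed

lemma proj_smul:
  assumes "v \<in> Vk k"
  shows "proj (smul a v) = smul a (proj v)"
proof (rule proj_unique)
  show "smul a v \<in> Vk k" using assms by (rule Vk_smul)
  show "smul a (proj v) \<in> C" using proj(1)[OF assms] by (rule smul)
  fix b assume b: "b \<in> C"
  have "(\<lambda>i. smul a v i - smul a (proj v) i) = smul a (\<lambda>i. v i - proj v i)"
    unfolding smul_def by (simp add: scaleC_diff_right)
  then show "hip k (\<lambda>i. smul a v i - smul a (proj v) i) b = 0"
    using proj(2)[OF assms b] by (simp add: hip_smul_left)
qed

lemma proj_zero: "proj (\<lambda>i. 0) = (\<lambda>i. 0)"
  by (rule proj_in[OF zero])

lemma proj_sum: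
  assumes "finite J" "\<And>j. j \<in> J \<Longrightarrow> f j \<in> Vk k"
  shows "proj (\<lambda>i. \<Sum>j\<in>J. f j i) = (\<lambda>i. \<Sum>j\<in>J. proj (f j) i)"
  using assms
proof (induction J rule: finite_induct)
  case empty
  then show ?case using proj_zero by simp
next
  case (insert j J)
  have fV: "f j \<in> Vk k" using insert by auto
  have sV: "(\<lambda>i. \<Sum>j\<in>J. f j i) \<in> Vk k" using insert(4) unfolding Vk_def by auto
  have "proj (\<lambda>i. \<Sum>j\<in>insert j J. f j i) = proj (\<lambda>i. f j i + (\<Sum>j\<in>J. f j i))"
    using insert by simp
  also have "\<dots> = (\<lambda>i. proj (f j) i + proj (\<lambda>i. \<Sum>j\<in>J. f j i) i)"
    using proj_add[OF fV sV] by simp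
  also have "\<dots> = (\<lambda>i. \<Sum>j\<in>insert j J. proj (f j) i)"
    using insert by simp
  finally show ?case .
qed

lemma proj_resid_norm:
  assumes v: "v \<in> Vk k"
  shows "hn2 k (\<lambda>i. v i - proj v i) \<le> hn2 k v"
proof -
  have "v = (\<lambda>i. proj v i + (v i - proj v i))" by simp
  then have "hn2 k v = hn2 k (proj v) + hn2 k (\<lambda>i. v i - proj v i) + 2 * Re (hip k (proj v) (\<lambda>i. v i - proj v i))"
    by (metis hn2_add)
  moreover have "hip k (proj v) (\<lambda>i. v i - proj v i) = 0"
    using proj(2)[OF v proj(1)[OF v]] hip_commute[of k "proj v" "\<lambda>i. v i - proj v i"] by simp
  ultimately show ?thesis using hn2_nonneg[of k "proj v"] by simp
qed

lemma fin_comb: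
  assumes "finite A" "\<And>a. a \<in> A \<Longrightarrow> f a \<in> C"
  shows "(\<lambda>i. \<Sum>a\<in>A. scaleC (c a) (f a i)) \<in> C"
  using assms
proof (induction A rule: finite_induct)
  case empty then show ?case using zero by simp
next
  case (insert a A)
  have "smul (c a) (f a) \<in> C" using insert by (intro smul) auto
  moreover have "(\<lambda>i. \<Sum>a\<in>A. scaleC (c a) (f a i)) \<in> C" using insert by auto
  ultimately have "(\<lambda>i. smul (c a) (f a) i + (\<Sum>a\<in>A. scaleC (c a) (f a i))) \<in> C" by (rule add)
  then show ?case using insert by (simp add: smul_def)
qed

lemma commute_rep:
  assumes W: "clinear W" and W': "\<And>x y. cinner (W x) y = cinner x (W' y)"
    and WC: "\<And>b. b \<in> C \<Longrightarrow> repW k W b \<in> C"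
    and W'C: "\<And>b. b \<in> C \<Longrightarrow> repW k W' b \<in> C"
    and v: "v \<in> Vk k"
  shows "proj (repW k W v) = repW k W (proj v)"
proof (rule proj_unique)
  show "repW k W v \<in> Vk k" unfolding Vk_def repW_def by simp
  show "repW k W (proj v) \<in> C" by (rule WC[OF proj(1)[OF v]])
  fix b assume b: "b \<in> C"
  have "hip k (\<lambda>i. repW k W v i - repW k W (proj v) i) b
      = (\<Sum>i<k. cinner (W (v i - proj v i)) (b i))"
    unfolding hip_def repW_def by (intro sum.cong) (auto simp: clinear_diff[OF W])
  also have "\<dots> = (\<Sum>i<k. cinner (v i - proj v i) (repW k W' b i))"
    unfolding repW_def by (intro sum.cong) (auto simp: W')
  also have "\<dots> = hip k (\<lambda>i. v i - proj v i) (repW k W' b)" unfolding hip_def ..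
  also have "\<dots> = 0" by (rule proj(2)[OF v W'C[OF b]])
  finally show "hip k (\<lambda>i. repW k W v i - repW k W (proj v) i) b = 0" .
qed

end

lemma span_Vk: "S \<subseteq> Vk k \<Longrightarrow> Hk_span S \<subseteq> Vk k"
  unfolding Hk_span_def Vk_def by (auto intro!: sum.neutral simp: subset_iff)

lemma span_zero: "(\<lambda>i. 0) \<in> Hk_span S"
  unfolding Hk_span_def by (rule CollectI, rule exI[of _ "{}"]) simp

lemma span_elem: "s \<in> S \<Longrightarrow> s \<in> Hk_span S"
  unfolding Hk_span_def
  by (rule CollectI, intro exI[of _ "{s}"] exI[of _ "\<lambda>_. 1"]) (simp add: scaleC_one)

lemma span_add:
  assumes "w1 \<in> Hk_span S" "w2 \<in> Hk_span S"
  shows "(\<lambda>i. w1 i + w2 i) \<in> Hk_span S"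
proof -
  obtain A c where A: "finite A" "A \<subseteq> S" "w1 = (\<lambda>i. \<Sum>v\<in>A. scaleC (c v) (v i))"
    using assms(1) unfolding Hk_span_def by blast
  obtain B d where B: "finite B" "B \<subseteq> S" "w2 = (\<lambda>i. \<Sum>v\<in>B. scaleC (d v) (v i))"
    using assms(2) unfolding Hk_span_def by blast
  define e where "e v = (if v \<in> A then c v else 0) + (if v \<in> B then d v else 0)" for v
  have 1: "(\<Sum>v\<in>A \<union> B. scaleC (if v \<in> A then c v else 0) (v i)) = (\<Sum>v\<in>A. scaleC (c v) (v i))" for i
  proof -
    have "(\<Sum>v\<in>A \<union> B. scaleC (if v \<in> A then c v else 0) (v i))
        = (\<Sum>v\<in>A \<union> B. if v \<in> A then scaleC (c v) (v i) else 0)"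
      by (intro sum.cong) auto
    also have "\<dots> = (\<Sum>v\<in>(A \<union> B) \<inter> A. scaleC (c v) (v i))"
      by (rule sum.inter_restrict[symmetric]) (use A B in auto)
    also have "(A \<union> B) \<inter> A = A" by auto
    finally show ?thesis .
  qed
  have 2: "(\<Sum>v\<in>A \<union> B. scaleC (if v \<in> B then d v else 0) (v i)) = (\<Sum>v\<in>B. scaleC (d v) (v i))" for i
  proof -
    have "(\<Sum>v\<in>A \<union> B. scaleC (if v \<in> B then d v else 0) (v i))
        = (\<Sum>v\<in>A \<union> B. if v \<in> B then scaleC (d v) (v i) else 0)"
      by (intro sum.cong) auto
    also have "\<dots> = (\<Sum>v\<in>(A \<union> B) \<inter> B. scaleC (d v) (v i))"
      by (rule sum.inter_restrict[symmetric]) (use A B in auto)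
    also have "(A \<union> B) \<inter> B = B" by auto
    finally show ?thesis .
  qed
  have "(\<lambda>i. w1 i + w2 i) = (\<lambda>i. \<Sum>v\<in>A \<union> B. scaleC (e v) (v i))"
    unfolding e_def A(3) B(3) by (simp add: scaleC_add_left sum.distrib 1 2)
  then show ?thesis unfolding Hk_span_def
    by (intro CollectI exI[of _ "A \<union> B"] exI[of _ e]) (use A B in auto)
qed

lemma span_smul:
  assumes "w \<in> Hk_span S"
  shows "smul a w \<in> Hk_span S"
proof -
  obtain A c where A: "finite A" "A \<subseteq> S" "w = (\<lambda>i. \<Sum>v\<in>A. scaleC (c v) (v i))"
    using assms(1) unfolding Hk_span_def by blast
  have "smul a w = (\<lambda>i. \<Sum>v\<in>A. scaleC (a * c v) (v i))"
    unfolding A(3) smul_def by (simp add: scaleC_sum_right scaleC_scaleC)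
  then show ?thesis unfolding Hk_span_def
    by (intro CollectI exI[of _ A] exI[of _ "\<lambda>v. a * c v"]) (use A in auto)
qed

lemma CS_iff:
  "v \<in> Hk_closed_span k S \<longleftrightarrow> v \<in> Vk k \<and> (\<forall>e>0. \<exists>w\<in>Hk_span S. hnorm k (\<lambda>i. v i - w i) < e)"
proof -
  have *: "(\<forall>e>0. \<exists>w\<in>Hk_span S. hn2 k (\<lambda>i. v i - w i) < e) \<longleftrightarrow>
           (\<forall>e>0. \<exists>w\<in>Hk_span S. hnorm k (\<lambda>i. v i - w i) < e)"
  proof
    assume H: "\<forall>e>0. \<exists>w\<in>Hk_span S. hn2 k (\<lambda>i. v i - w i) < e"
    show "\<forall>e>0. \<exists>w\<in>Hk_span S. hnorm k (\<lambda>i. v i - w i) < e"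
    proof (intro allI impI)
      fix e :: real assume e: "e > 0"
      have "e\<^sup>2 > 0" using e by simp
      then obtain w where "w \<in> Hk_span S" "hn2 k (\<lambda>i. v i - w i) < e\<^sup>2" using H by blast
      then show "\<exists>w\<in>Hk_span S. hnorm k (\<lambda>i. v i - w i) < e" using hnorm_lt_iff[OF e] by blast
    qed
  next
    assume H: "\<forall>e>0. \<exists>w\<in>Hk_span S. hnorm k (\<lambda>i. v i - w i) < e"
    show "\<forall>e>0. \<exists>w\<in>Hk_span S. hn2 k (\<lambda>i. v i - w i) < e"
    proof (intro allI impI)
      fix e :: real assume e: "e > 0"
      then have se: "sqrt e > 0" by simp
      then obtain w where "w \<in> Hk_span S" "hnorm k (\<lambda>i. v i - w i) < sqrt e" using H se by blast
      then show "\<exists>w\<in>Hk_span S. hn2 k (\<lambda>i. v i - w i) < e" using hnorm_lt_iff[OF se] e by auto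
    qed
  qed
  show ?thesis unfolding Hk_closed_span_def Vk_def hn2_def[symmetric] using * by auto
qed

lemma CS_hsub:
  fixes S :: "(nat \<Rightarrow> 'h::{complex_inner,complete_space}) set"
  assumes S: "S \<subseteq> Vk k"
  shows "hsub k (Hk_closed_span k S)"
proof
  show "Hk_closed_span k S \<subseteq> Vk k" using CS_iff by blast
  show "(\<lambda>i. 0) \<in> Hk_closed_span k S"
    unfolding CS_iff
  proof (intro conjI allI impI)
    show "(\<lambda>i. 0) \<in> Vk k" unfolding Vk_def by simp
    fix e :: real assume "e > 0"
    moreover have "hnorm k (\<lambda>i. (0::'h) - 0) = 0" unfolding hnorm_def hn2_def by simp
    ultimately show "\<exists>w\<in>Hk_span S. hnorm k (\<lambda>i. 0 - w i) < e"
      using span_zero by (intro bexI[of _ "\<lambda>i. 0"]) auto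
  qed
next
  fix v w assume v: "v \<in> Hk_closed_span k S" and w: "w \<in> Hk_closed_span k S"
  show "(\<lambda>i. v i + w i) \<in> Hk_closed_span k S"
    unfolding CS_iff
  proof (intro conjI allI impI)
    show "(\<lambda>i. v i + w i) \<in> Vk k" using v w unfolding CS_iff by (auto intro: Vk_add)
    fix e :: real assume e: "e > 0"
    have e2: "e/2 > 0" using e by simp
    obtain v' where v': "v' \<in> Hk_span S" "hnorm k (\<lambda>i. v i - v' i) < e/2" using v e2 unfolding CS_iff by blast
    obtain w' where w': "w' \<in> Hk_span S" "hnorm k (\<lambda>i. w i - w' i) < e/2" using w e2 unfolding CS_iff by blast
    have "hnorm k (\<lambda>i. v i + w i - (v' i + w' i)) = hnorm k (\<lambda>i. (v i - v' i) + (w i - w' i))"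
      by (simp add: algebra_simps)
    also have "\<dots> \<le> hnorm k (\<lambda>i. v i - v' i) + hnorm k (\<lambda>i. w i - w' i)" by (rule hnorm_triangle)
    finally have "hnorm k (\<lambda>i. v i + w i - (v' i + w' i)) < e" using v'(2) w'(2) by simp
    then show "\<exists>u\<in>Hk_span S. hnorm k (\<lambda>i. v i + w i - u i) < e"
      using span_add[OF v'(1) w'(1)] by (intro bexI[of _ "\<lambda>i. v' i + w' i"]) auto
  qed
next
  fix v :: "nat \<Rightarrow> 'h" and a assume v: "v \<in> Hk_closed_span k S"
  show "smul a v \<in> Hk_closed_span k S"
    unfolding CS_iff
  proof (intro conjI allI impI)
    show "smul a v \<in> Vk k" using v unfolding CS_iff by (auto intro: Vk_smul)
    fix e :: real assume e: "e > 0"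
    have ae: "e / (cmod a + 1) > 0" using e by (simp add: add_nonneg_pos)
    obtain v' where v': "v' \<in> Hk_span S" "hnorm k (\<lambda>i. v i - v' i) < e / (cmod a + 1)"
      using v ae unfolding CS_iff by blast
    have "(\<lambda>i. smul a v i - smul a v' i) = smul a (\<lambda>i. v i - v' i)"
      unfolding smul_def by (simp add: scaleC_diff_right)
    then have "hnorm k (\<lambda>i. smul a v i - smul a v' i) = cmod a * hnorm k (\<lambda>i. v i - v' i)"
      by (simp add: hnorm_smul)
    also have "\<dots> \<le> cmod a * (e / (cmod a + 1))"
      using v'(2) by (intro mult_left_mono) auto
    also have "\<dots> < e"
    proof -
      have "cmod a * (e / (cmod a + 1)) = e * (cmod a / (cmod a + 1))" by simp
      also have "\<dots> < e * 1"
        using e by (intro mult_strict_left_mono) (auto simp: divide_less_eq_1_pos add_nonneg_pos)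
      finally show ?thesis by simp
    qed
    finally show "\<exists>u\<in>Hk_span S. hnorm k (\<lambda>i. smul a v i - u i) < e"
      using span_smul[OF v'(1)] by blast
  qed
next
  fix v :: "nat \<Rightarrow> 'h"
  assume v: "v \<in> Vk k" and H: "\<And>e. e > 0 \<Longrightarrow> \<exists>b\<in>Hk_closed_span k S. hnorm k (\<lambda>i. v i - b i) < e"
  show "v \<in> Hk_closed_span k S"
    unfolding CS_iff
  proof (intro conjI allI impI v)
    fix e :: real assume e: "e > 0"
    have e2: "e/2 > 0" using e by simp
    obtain b where b: "b \<in> Hk_closed_span k S" "hnorm k (\<lambda>i. v i - b i) < e/2" using H[OF e2] by blast
    obtain w where w: "w \<in> Hk_span S" "hnorm k (\<lambda>i. b i - w i) < e/2" using b(1) e2 unfolding CS_iff by blast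
    have "hnorm k (\<lambda>i. v i - w i) \<le> hnorm k (\<lambda>i. v i - b i) + hnorm k (\<lambda>i. b i - w i)"
      by (rule hnorm_diff_triangle)
    then show "\<exists>w\<in>Hk_span S. hnorm k (\<lambda>i. v i - w i) < e" using b(2) w by force
  qed
qed

lemma CS_least:
  fixes S :: "(nat \<Rightarrow> 'h::{complex_inner,complete_space}) set"
  assumes C: "hsub k C" and SC: "S \<subseteq> C"
  shows "Hk_closed_span k S \<subseteq> C"
proof
  interpret hsub k C by fact
  have spanC: "Hk_span S \<subseteq> C"
  proof
    fix w assume "w \<in> Hk_span S"
    then obtain A c where A: "finite A" "A \<subseteq> S" "w = (\<lambda>i. \<Sum>v\<in>A. scaleC (c v) (v i))"
      unfolding Hk_span_def by blast
    show "w \<in> C" unfolding A(3) by (rule fin_comb) (use A SC in auto)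
  qed
  fix v assume v: "v \<in> Hk_closed_span k S"
  show "v \<in> C"
  proof (rule closed)
    show "v \<in> Vk k" using v unfolding CS_iff by blast
    fix e :: real assume "e > 0"
    then show "\<exists>b\<in>C. hnorm k (\<lambda>i. v i - b i) < e" using v spanC unfolding CS_iff by blast
  qed
qed

lemma CS_elem:
  fixes S :: "(nat \<Rightarrow> 'h::{complex_inner,complete_space}) set"
  assumes S: "S \<subseteq> Vk k" and s: "s \<in> S"
  shows "s \<in> Hk_closed_span k S"
  unfolding CS_iff
proof (intro conjI allI impI)
  show "s \<in> Vk k" using S s by blast
  fix e :: real assume "e > 0"
  then show "\<exists>w\<in>Hk_span S. hnorm k (\<lambda>i. s i - w i) < e"
    using span_elem[OF s] by (intro bexI[of _ s]) (auto simp: hnorm_def hn2_def)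
qed

lemma CS_invariant:
  fixes S :: "(nat \<Rightarrow> 'h::{complex_inner,complete_space}) set"
  assumes S: "S \<subseteq> Vk k" and W: "clinear W" and Wn: "\<And>x. norm (W x) = norm x"
    and WS: "\<And>s. s \<in> S \<Longrightarrow> repW k W s \<in> Hk_closed_span k S"
    and b: "b \<in> Hk_closed_span k S"
  shows "repW k W b \<in> Hk_closed_span k S"
proof -
  interpret hsub k "Hk_closed_span k S" by (rule CS_hsub[OF S])
  have spanW: "repW k W w \<in> Hk_closed_span k S" if wS: "w \<in> Hk_span S" for w
  proof -
    obtain A c where A: "finite A" "A \<subseteq> S" "w = (\<lambda>i. \<Sum>v\<in>A. scaleC (c v) (v i))"
      using wS unfolding Hk_span_def by blast
    have "repW k W w i = (\<Sum>v\<in>A. scaleC (c v) (repW k W v i))" for i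
    proof (cases "i < k")
      case True
      then have "repW k W w i = W (\<Sum>v\<in>A. scaleC (c v) (v i))" unfolding A(3) repW_def by simp
      also have "\<dots> = (\<Sum>v\<in>A. W (scaleC (c v) (v i)))" by (rule clinear_sum[OF W])
      also have "\<dots> = (\<Sum>v\<in>A. scaleC (c v) (repW k W v i))"
        using True by (intro sum.cong refl) (simp add: repW_def clinear_scaleC[OF W])
      finally show ?thesis .
    next
      case False
      then show ?thesis unfolding repW_def by simp
    qed
    then have "repW k W w = (\<lambda>i. \<Sum>v\<in>A. scaleC (c v) (repW k W v i))" by (rule ext)
    also have "\<dots> \<in> Hk_closed_span k S" by (rule fin_comb) (use A WS in auto)
    finally show ?thesis .
  qed
  show ?thesis
  proof (rule closed)
    show "repW k W b \<in> Vk k" unfolding Vk_def repW_def by simp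
    fix e :: real assume "e > 0"
    then obtain w where w: "w \<in> Hk_span S" "hnorm k (\<lambda>i. b i - w i) < e" using b unfolding CS_iff by blast
    have "hnorm k (\<lambda>i. repW k W b i - repW k W w i) = hnorm k (\<lambda>i. b i - w i)"
    proof -
      have "norm (repW k W b i - repW k W w i) = norm (b i - w i)" if "i < k" for i
      proof -
        have "repW k W b i - repW k W w i = W (b i - w i)"
          using that unfolding repW_def by (simp add: clinear_diff[OF W])
        then show ?thesis by (simp add: Wn)
      qed
      then show ?thesis unfolding hnorm_def hn2_def by (intro arg_cong[where f=sqrt] sum.cong) auto
    qed
    then show "\<exists>b'\<in>Hk_closed_span k S. hnorm k (\<lambda>i. repW k W b i - b' i) < e"
      using spanW[OF w(1)] w(2) by (intro bexI[of _ "repW k W w"]) auto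
  qed
qed




definition l2 :: "('g \<Rightarrow> complex) \<Rightarrow> 'g set \<Rightarrow> bool" where
  "l2 a I \<longleftrightarrow> (\<lambda>g. (cmod (a g))\<^sup>2) summable_on I"

lemma l2_add:
  assumes "l2 a I" "l2 b I" shows "l2 (\<lambda>g. a g + b g) I"
proof -
  have "(\<lambda>g. 2 * (cmod (a g))\<^sup>2 + 2 * (cmod (b g))\<^sup>2) summable_on I"
    using assms unfolding l2_def by (intro summable_on_add summable_on_cmult_right)
  moreover have "(cmod (a g + b g))\<^sup>2 \<le> 2 * (cmod (a g))\<^sup>2 + 2 * (cmod (b g))\<^sup>2" for g
  proof -
    have "(cmod (a g + b g))\<^sup>2 \<le> (cmod (a g) + cmod (b g))\<^sup>2"
      by (intro power_mono norm_triangle_ineq) simp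
    also have "\<dots> \<le> 2 * (cmod (a g))\<^sup>2 + 2 * (cmod (b g))\<^sup>2"
    proof -
      fix p q :: real
      have "(cmod (a g) + cmod (b g))\<^sup>2 + (cmod (a g) - cmod (b g))\<^sup>2 = 2 * (cmod (a g))\<^sup>2 + 2 * (cmod (b g))\<^sup>2"
        by (simp add: power2_eq_square algebra_simps)
      moreover have "0 \<le> (cmod (a g) - cmod (b g))\<^sup>2" by simp
      ultimately show ?thesis by linarith
    qed
    finally show ?thesis .
  qed
  ultimately show ?thesis unfolding l2_def
    by (rule summable_on_comparison_test) auto
qed

lemma l2_scale:
  assumes "l2 a I" shows "l2 (\<lambda>g. c * a g) I"
  using summable_on_cmult_right[OF assms[unfolded l2_def], of "(cmod c)\<^sup>2"]
  unfolding l2_def by (simp add: norm_mult power_mult_distrib)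

lemma l2_diff:
  assumes "l2 a I" "l2 b I" shows "l2 (\<lambda>g. a g - b g) I"
  using l2_add[OF assms(1) l2_scale[OF assms(2), of "-1"]] by simp

lemma l2_comb:
  assumes "finite A" "\<And>v. v \<in> A \<Longrightarrow> l2 (a v) I"
  shows "l2 (\<lambda>g. \<Sum>v\<in>A. c v * a v g) I"
  using assms
proof (induction A rule: finite_induct)
  case empty then show ?case by (simp add: l2_def)
next
  case (insert v A)
  then show ?case by (simp add: l2_add l2_scale)
qed

lemma l2_cong:
  assumes a: "l2 a I" and e: "\<And>g. g \<in> I \<Longrightarrow> cmod (a g) = cmod (b g)"
  shows "l2 b I"
proof -
  have "(\<lambda>g. (cmod (a g))\<^sup>2) summable_on I \<longleftrightarrow> (\<lambda>g. (cmod (b g))\<^sup>2) summable_on I"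
    by (rule summable_on_cong) (simp add: e)
  then show ?thesis using a unfolding l2_def by simp
qed

definition syn :: "('g, 'b) monoid_scheme \<Rightarrow> ('g \<Rightarrow> 'h::complex_inner \<Rightarrow> 'h) \<Rightarrow> 'h \<Rightarrow> ('g \<Rightarrow> complex) \<Rightarrow> 'h" where
  "syn G \<pi> y a = (\<Sum>\<^sub>\<infinity>h\<in>carrier G. scaleC (ic G \<pi> h * cnj (a h)) (\<pi> (inv\<^bsub>G\<^esub> h) y))"

locale syn_ctx =
  fixes G :: "('g, 'b) monoid_scheme" and \<pi> :: "'g \<Rightarrow> 'h::{complex_inner,complete_space} \<Rightarrow> 'h"
    and y :: 'h and By :: real
  assumes grp: "group G" and R: "proj_unitary_rep G \<pi>"
    and By: "0 \<le> By" "\<And>z. (\<lambda>g. (cmod (cinner z (\<pi> g y)))\<^sup>2) summable_on carrier G"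
    "\<And>z. (\<Sum>\<^sub>\<infinity>g\<in>carrier G. (cmod (cinner z (\<pi> g y)))\<^sup>2) \<le> By * (norm z)\<^sup>2"
begin

lemma inv_bes1: "(\<lambda>g. (cmod (cinner z (\<pi> (inv\<^bsub>G\<^esub> g) y)))\<^sup>2) summable_on carrier G"
  by (rule bessel_inv(1)[where \<pi>=\<pi> and x=y and B=By, OF grp By(2) By(3)])

lemma inv_bes2: "(\<Sum>\<^sub>\<infinity>g\<in>carrier G. (cmod (cinner z (\<pi> (inv\<^bsub>G\<^esub> g) y)))\<^sup>2) \<le> By * (norm z)\<^sup>2"
  by (rule bessel_inv(2)[where \<pi>=\<pi> and x=y and B=By, OF grp By(2) By(3)])

lemma coef_l2: "l2 a (carrier G) \<Longrightarrow> l2 (\<lambda>h. ic G \<pi> h * cnj (a h)) (carrier G)"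
  by (erule l2_cong) (simp add: norm_mult ic_norm[OF grp R])

lemma syn_summable:
  assumes "l2 a (carrier G)"
  shows "(\<lambda>h. scaleC (ic G \<pi> h * cnj (a h)) (\<pi> (inv\<^bsub>G\<^esub> h) y)) summable_on carrier G"
  using synth_summable[OF inv_bes1 inv_bes2 By(1)
      coef_l2[OF assms, unfolded l2_def]] .

lemma syn_norm:
  assumes "l2 a (carrier G)"
  shows "norm (syn G \<pi> y a) \<le> sqrt By * sqrt (\<Sum>\<^sub>\<infinity>h\<in>carrier G. (cmod (a h))\<^sup>2)"
proof -
  have "norm (syn G \<pi> y a) \<le> sqrt By * sqrt (\<Sum>\<^sub>\<infinity>h\<in>carrier G. (cmod (ic G \<pi> h * cnj (a h)))\<^sup>2)"
    unfolding syn_def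
    by (rule synth_norm[OF inv_bes1 inv_bes2 By(1)
      coef_l2[OF assms, unfolded l2_def]])
  also have "(\<Sum>\<^sub>\<infinity>h\<in>carrier G. (cmod (ic G \<pi> h * cnj (a h)))\<^sup>2) = (\<Sum>\<^sub>\<infinity>h\<in>carrier G. (cmod (a h))\<^sup>2)"
    by (rule infsum_cong) (simp add: norm_mult ic_norm[OF grp R])
  finally show ?thesis .
qed

lemma syn_diff:
  assumes "l2 a (carrier G)" "l2 b (carrier G)"
  shows "syn G \<pi> y (\<lambda>h. a h - b h) = syn G \<pi> y a - syn G \<pi> y b"
proof -
  have "syn G \<pi> y (\<lambda>h. a h - b h) = (\<Sum>\<^sub>\<infinity>h\<in>carrier G.
      scaleC (ic G \<pi> h * cnj (a h)) (\<pi> (inv\<^bsub>G\<^esub> h) y) - scaleC (ic G \<pi> h * cnj (b h)) (\<pi> (inv\<^bsub>G\<^esub> h) y))"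
    unfolding syn_def by (rule infsum_cong) (simp add: right_diff_distrib scaleC_diff_left)
  also have "\<dots> = syn G \<pi> y a - syn G \<pi> y b"
    unfolding syn_def by (rule infsum_diff'[OF syn_summable[OF assms(1)] syn_summable[OF assms(2)]])
  finally show ?thesis .
qed

lemma syn_comb:
  assumes "finite A" "\<And>v. v \<in> A \<Longrightarrow> l2 (a v) (carrier G)"
  shows "syn G \<pi> y (\<lambda>h. \<Sum>v\<in>A. c v * a v h) = (\<Sum>v\<in>A. scaleC (cnj (c v)) (syn G \<pi> y (a v)))"
proof -
  have "syn G \<pi> y (\<lambda>h. \<Sum>v\<in>A. c v * a v h) = (\<Sum>\<^sub>\<infinity>h\<in>carrier G.
      \<Sum>v\<in>A. scaleC (cnj (c v)) (scaleC (ic G \<pi> h * cnj (a v h)) (\<pi> (inv\<^bsub>G\<^esub> h) y)))"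
    unfolding syn_def
    by (rule infsum_cong) (simp add: scaleC_scaleC scaleC_sum_left sum_distrib_left mult.commute mult.left_commute)
  also have "\<dots> = (\<Sum>v\<in>A. \<Sum>\<^sub>\<infinity>h\<in>carrier G. scaleC (cnj (c v)) (scaleC (ic G \<pi> h * cnj (a v h)) (\<pi> (inv\<^bsub>G\<^esub> h) y)))"
    by (rule infsum_sum') (intro summable_scaleC syn_summable assms(2))
  also have "\<dots> = (\<Sum>v\<in>A. scaleC (cnj (c v)) (syn G \<pi> y (a v)))"
    unfolding syn_def by (intro sum.cong refl infsum_scaleC syn_summable assms(2))
  finally show ?thesis .
qed

end


section \<open>Matrix entries of the projection\<close>

definition ej :: "nat \<Rightarrow> 'h::complex_inner \<Rightarrow> (nat \<Rightarrow> 'h)" where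
  "ej j x = (\<lambda>l. if l = j then x else 0)"

lemma ej_Vk: "j < k \<Longrightarrow> ej j x \<in> Vk k"
  unfolding ej_def Vk_def by auto

lemma hn2_ej: "j < k \<Longrightarrow> hn2 k (ej j x) = (norm x)\<^sup>2"
proof -
  assume j: "j < k"
  have "hn2 k (ej j x) = (\<Sum>l<k. if l = j then (norm x)\<^sup>2 else 0)"
    unfolding hn2_def ej_def by (intro sum.cong) auto
  also have "\<dots> = (norm x)\<^sup>2" using j by simp
  finally show ?thesis .
qed

lemma ej_sum: "v \<in> Vk k \<Longrightarrow> (\<Sum>j<k. ej j (v j) l) = v l"
proof -
  assume v: "v \<in> Vk k"
  have "(\<Sum>j<k. ej j (v j) l) = (\<Sum>j<k. if l = j then v l else 0)"
    unfolding ej_def by (intro sum.cong) auto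
  also have "\<dots> = (if l < k then v l else 0)" by simp
  also have "\<dots> = v l" using v unfolding Vk_def by auto
  finally show ?thesis .
qed

context hsub
begin

definition Qm :: "nat \<Rightarrow> nat \<Rightarrow> 'h \<Rightarrow> 'h" where
  "Qm i j x = ej j x i - proj (ej j x) i"

lemma Qm_clinear: assumes j: "j < k" shows "clinear (Qm i j)"
  unfolding clinear_def
proof (intro conjI allI)
  fix x y :: 'h
  have "ej j (x + y) = (\<lambda>l. ej j x l + ej j y l)" unfolding ej_def by auto
  then show "Qm i j (x + y) = Qm i j x + Qm i j y"
    unfolding Qm_def using proj_add[OF ej_Vk[OF j] ej_Vk[OF j], of x y] by simp
next
  fix a and x :: 'h
  have "ej j (scaleC a x) = smul a (ej j x)" unfolding ej_def smul_def by auto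
  then show "Qm i j (scaleC a x) = scaleC a (Qm i j x)"
    unfolding Qm_def using proj_smul[OF ej_Vk[OF j], of a x]
    by (simp add: smul_def scaleC_diff_right)
qed

lemma Qm_bound: assumes j: "j < k" shows "norm (Qm i j x) \<le> norm x"
proof (cases "i < k")
  case True
  define v where "v = ej j x"
  have vV: "v \<in> Vk k" unfolding v_def by (rule ej_Vk[OF j])
  have "norm (Qm i j x) \<le> hnorm k (\<lambda>l. v l - proj v l)"
    unfolding Qm_def v_def[symmetric] by (rule component_le_hnorm[OF True])
  also have "\<dots> \<le> sqrt (hn2 k v)"
    unfolding hnorm_def using proj_resid_norm[OF vV] by simp
  also have "\<dots> = norm x" unfolding v_def hn2_ej[OF j] by simp
  finally show ?thesis .
next
  case False
  have "proj (ej j x) i = 0" using in_Vk[OF proj(1)[OF ej_Vk[OF j]]] False by simp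
  moreover have "ej j x i = 0" using False j unfolding ej_def by auto
  ultimately show ?thesis unfolding Qm_def by simp
qed

lemma Qm_bounded: "j < k \<Longrightarrow> bounded_clinear_op (Qm i j)"
  unfolding bounded_clinear_op_def using Qm_clinear Qm_bound
  by (metis mult.right_neutral)

lemma Qm_comm:
  assumes j: "j < k" and W: "clinear W" and W': "\<And>x y. cinner (W x) y = cinner x (W' y)"
    and WC: "\<And>b. b \<in> C \<Longrightarrow> repW k W b \<in> C"
    and W'C: "\<And>b. b \<in> C \<Longrightarrow> repW k W' b \<in> C"
  shows "Qm i j (W x) = W (Qm i j x)"
proof -
  have e: "ej j (W x) = repW k W (ej j x)"
    unfolding ej_def repW_def using j by (auto simp: fun_eq_iff clinear_zero[OF W])
  have p: "proj (repW k W (ej j x)) = repW k W (proj (ej j x))"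
    by (rule commute_rep[OF W W' WC W'C ej_Vk[OF j]])
  show ?thesis
  proof (cases "i < k")
    case True
    then show ?thesis unfolding Qm_def e p by (simp add: repW_def clinear_diff[OF W])
  next
    case False
    have "proj (ej j x) i = 0" using in_Vk[OF proj(1)[OF ej_Vk[OF j]]] False by simp
    moreover have "ej j x i = 0" using False j unfolding ej_def by auto
    ultimately show ?thesis unfolding Qm_def e p using False by (simp add: repW_def clinear_zero[OF W])
  qed
qed

lemma resid_sum:
  assumes v: "v \<in> Vk k"
  shows "v l - proj v l = (\<Sum>j<k. Qm l j (v j))"
proof -
  have "proj v = proj (\<lambda>l. \<Sum>j<k. ej j (v j) l)" using ej_sum[OF v] by simp
  also have "\<dots> = (\<lambda>l. \<Sum>j<k. proj (ej j (v j)) l)"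
    by (rule proj_sum) (auto intro: ej_Vk)
  finally have "proj v l = (\<Sum>j<k. proj (ej j (v j)) l)" by simp
  then have "v l - proj v l = (\<Sum>j<k. ej j (v j) l) - (\<Sum>j<k. proj (ej j (v j)) l)"
    using ej_sum[OF v] by simp
  also have "\<dots> = (\<Sum>j<k. Qm l j (v j))" unfolding Qm_def by (simp add: sum_subtractf)
  finally show ?thesis .
qed

end

lemma zero_if_small:
  fixes z :: "'a::real_normed_vector"
  assumes K: "0 \<le> K" and H: "\<And>e. e > 0 \<Longrightarrow> norm z \<le> K * sqrt e"
  shows "z = 0"
proof (rule ccontr)
  assume "z \<noteq> 0"
  then have n: "norm z > 0" by simp
  define e where "e = (norm z / (K + 1))\<^sup>2"
  have K1: "K + 1 > 0" using K by simp
  have e0: "e > 0" unfolding e_def using n K1 by simp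
  have "sqrt e = norm z / (K + 1)" unfolding e_def using n K1 by simp
  then have "norm z \<le> K * (norm z / (K + 1))" using H[OF e0] by simp
  also have "\<dots> < norm z"
  proof -
    have "K * (norm z / (K + 1)) = norm z * (K / (K + 1))" by simp
    also have "\<dots> < norm z * 1" using n K1 by (intro mult_strict_left_mono) (auto simp: divide_less_eq_1_pos)
    finally show ?thesis by simp
  qed
  finally show False by simp
qed




definition Wadj :: "('g, 'b) monoid_scheme \<Rightarrow> ('g \<Rightarrow> 'h::complex_inner \<Rightarrow> 'h) \<Rightarrow> 'g \<Rightarrow> 'h \<Rightarrow> 'h" where
  "Wadj G \<sigma> g = (\<lambda>y. scaleC (ic G \<sigma> g) (\<sigma> (inv\<^bsub>G\<^esub> g) y))"

lemma Wadj_cinner: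
  assumes grp: "group G" and R: "proj_unitary_rep G \<sigma>" and g: "g \<in> carrier G"
  shows "cinner (\<sigma> g x) y = cinner x (Wadj G \<sigma> g y)"
proof -
  have "cinner x (Wadj G \<sigma> g y) = cnj (ic G \<sigma> g) * cinner x (\<sigma> (inv\<^bsub>G\<^esub> g) y)"
    unfolding Wadj_def by (simp add: cinner_scaleC_right)
  also have "\<dots> = (cnj (ic G \<sigma> g) * ic G \<sigma> g) * cinner (\<sigma> g x) y"
    by (simp add: rep_inv_cinner[OF grp R g] mult.assoc)
  also have "\<dots> = cinner (\<sigma> g x) y" using cnj_mult_unit[OF ic_norm[OF grp R g]] by simp
  finally show ?thesis by simp
qed

lemma Wadj_clinear:
  assumes grp: "group G" and R: "proj_unitary_rep G \<sigma>" and g: "g \<in> carrier G"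
  shows "clinear (Wadj G \<sigma> g)"
proof -
  have U: "clinear (\<sigma> (inv\<^bsub>G\<^esub> g))"
    using unitary_clinear[OF rep_unitary[OF R group.inv_closed[OF grp g]]] .
  show ?thesis unfolding clinear_def Wadj_def
    by (simp add: clinear_add[OF U] clinear_scaleC[OF U] scaleC_add_right scaleC_scaleC mult.commute)
qed

lemma Wadj_norm:
  assumes grp: "group G" and R: "proj_unitary_rep G \<sigma>" and g: "g \<in> carrier G"
  shows "norm (Wadj G \<sigma> g x) = norm x"
  unfolding Wadj_def
  by (simp add: norm_scaleC ic_norm[OF grp R g] unitary_norm[OF rep_unitary[OF R group.inv_closed[OF grp g]]])

definition Cset :: "nat \<Rightarrow> ('g, 'b) monoid_scheme \<Rightarrow> ('g \<Rightarrow> 'h::complex_inner \<Rightarrow> 'h) \<Rightarrow> (nat \<Rightarrow> 'h) \<Rightarrow> (nat \<Rightarrow> 'h) set" where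
  "Cset k G \<sigma> \<eta> = Hk_closed_span k ((\<lambda>g. rep_k k \<sigma> g \<eta>) ` carrier G)"

lemma S_Vk: "(\<lambda>g. rep_k k \<sigma> g \<eta>) ` carrier G \<subseteq> Vk k"
  unfolding Vk_def rep_k_def by auto

lemma C_hsub: "hsub k (Cset k G (\<sigma> :: 'g \<Rightarrow> 'h::{complex_inner,complete_space} \<Rightarrow> 'h) \<eta>)"
  unfolding Cset_def by (rule CS_hsub[OF S_Vk])

lemma C_elem:
  fixes \<sigma> :: "'g \<Rightarrow> 'h::{complex_inner,complete_space} \<Rightarrow> 'h"
  shows "h \<in> carrier G \<Longrightarrow> rep_k k \<sigma> h \<eta> \<in> Cset k G \<sigma> \<eta>"
  unfolding Cset_def by (rule CS_elem[OF S_Vk]) auto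

lemma C_inv_gen:
  fixes \<sigma> :: "'g \<Rightarrow> 'h::{complex_inner,complete_space} \<Rightarrow> 'h"
  assumes W: "clinear W" and Wn: "\<And>x. norm (W x) = norm x"
    and WS: "\<And>h. h \<in> carrier G \<Longrightarrow> repW k W (rep_k k \<sigma> h \<eta>) \<in> Cset k G \<sigma> \<eta>"
    and b: "b \<in> Cset k G \<sigma> \<eta>"
  shows "repW k W b \<in> Cset k G \<sigma> \<eta>"
  using CS_invariant[OF S_Vk W Wn _ b[unfolded Cset_def]] WS unfolding Cset_def by auto

lemma C_inv_sigma:
  fixes \<sigma> :: "'g \<Rightarrow> 'h::{complex_inner,complete_space} \<Rightarrow> 'h"
  assumes grp: "group G" and R: "proj_unitary_rep G \<sigma>" and g: "g \<in> carrier G"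
    and b: "b \<in> Cset k G \<sigma> \<eta>"
  shows "repW k (\<sigma> g) b \<in> Cset k G \<sigma> \<eta>"
proof (rule C_inv_gen[OF _ _ _ b])
  have U: "unitary_op (\<sigma> g)" by (rule rep_unitary[OF R g])
  show "clinear (\<sigma> g)" by (rule unitary_clinear[OF U])
  show "norm (\<sigma> g x) = norm x" for x by (rule unitary_norm[OF U])
  fix h assume h: "h \<in> carrier G"
  interpret hsub k "Cset k G \<sigma> \<eta>" by (rule C_hsub)
  have gh: "g \<otimes>\<^bsub>G\<^esub> h \<in> carrier G" using grp g h by (simp add: group.is_monoid monoid.m_closed)
  have "repW k (\<sigma> g) (rep_k k \<sigma> h \<eta>) = smul (pmu G \<sigma> g h) (rep_k k \<sigma> (g \<otimes>\<^bsub>G\<^esub> h) \<eta>)"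
    unfolding repW_def rep_k_def smul_def by (auto simp: fun_eq_iff pmu_mult[OF R g h])
  also have "\<dots> \<in> Cset k G \<sigma> \<eta>" by (rule smul[OF C_elem[OF gh]])
  finally show "repW k (\<sigma> g) (rep_k k \<sigma> h \<eta>) \<in> Cset k G \<sigma> \<eta>" .
qed

lemma C_inv_Wadj:
  fixes \<sigma> :: "'g \<Rightarrow> 'h::{complex_inner,complete_space} \<Rightarrow> 'h"
  assumes grp: "group G" and R: "proj_unitary_rep G \<sigma>" and g: "g \<in> carrier G"
    and b: "b \<in> Cset k G \<sigma> \<eta>"
  shows "repW k (Wadj G \<sigma> g) b \<in> Cset k G \<sigma> \<eta>"
proof (rule C_inv_gen[OF Wadj_clinear[OF grp R g] Wadj_norm[OF grp R g] _ b])
  fix h assume h: "h \<in> carrier G"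
  interpret hsub k "Cset k G \<sigma> \<eta>" by (rule C_hsub)
  have ig: "inv\<^bsub>G\<^esub> g \<in> carrier G" using grp g by simp
  have gh: "inv\<^bsub>G\<^esub> g \<otimes>\<^bsub>G\<^esub> h \<in> carrier G" using grp ig h by (simp add: group.is_monoid monoid.m_closed)
  have "repW k (Wadj G \<sigma> g) (rep_k k \<sigma> h \<eta>)
      = smul (ic G \<sigma> g * pmu G \<sigma> (inv\<^bsub>G\<^esub> g) h) (rep_k k \<sigma> (inv\<^bsub>G\<^esub> g \<otimes>\<^bsub>G\<^esub> h) \<eta>)"
    unfolding repW_def rep_k_def smul_def Wadj_def
    by (auto simp: fun_eq_iff pmu_mult[OF R ig h] scaleC_scaleC)
  also have "\<dots> \<in> Cset k G \<sigma> \<eta>" by (rule smul[OF C_elem[OF gh]])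
  finally show "repW k (Wadj G \<sigma> g) (rep_k k \<sigma> h \<eta>) \<in> Cset k G \<sigma> \<eta>" .
qed

lemma Q_commutant:
  fixes \<sigma> :: "'g \<Rightarrow> 'h::{complex_inner,complete_space} \<Rightarrow> 'h"
  assumes grp: "group G" and R: "proj_unitary_rep G \<sigma>" and j: "j < k"
  shows "hsub.Qm k (Cset k G \<sigma> \<eta>) i j \<in> commutant (\<sigma> ` carrier G)"
proof -
  interpret hsub k "Cset k G \<sigma> \<eta>" by (rule C_hsub)
  have "Qm i j (\<sigma> g x) = \<sigma> g (Qm i j x)" if g: "g \<in> carrier G" for g x
    by (rule Qm_comm[OF j unitary_clinear[OF rep_unitary[OF R g]] Wadj_cinner[OF grp R g]
          C_inv_sigma[OF grp R g] C_inv_Wadj[OF grp R g]])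
  then show ?thesis unfolding commutant_def using Qm_bounded[OF j] by (auto simp: fun_eq_iff)
qed

lemma commute_Q:
  fixes \<sigma> :: "'g \<Rightarrow> 'h::{complex_inner,complete_space} \<Rightarrow> 'h"
  assumes grp: "group G" and R: "proj_unitary_rep G \<sigma>" and j: "j < k"
    and cp: "commutant_pair G \<pi> \<sigma>" and T: "T \<in> commutant (\<pi> ` carrier G)"
  shows "T (hsub.Qm k (Cset k G \<sigma> \<eta>) i j z) = hsub.Qm k (Cset k G \<sigma> \<eta>) i j (T z)"
proof -
  have "T \<in> commutant (commutant (\<sigma> ` carrier G))" using T cp unfolding commutant_pair_def by simp
  then have "T \<circ> hsub.Qm k (Cset k G \<sigma> \<eta>) i j = hsub.Qm k (Cset k G \<sigma> \<eta>) i j \<circ> T"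
    using Q_commutant[OF grp R j] unfolding commutant_def by blast
  then show ?thesis by (metis comp_apply)
qed


lemma Theta_row_l2:
  assumes b: "bessel_vector G \<pi> \<xi>j"
  shows "l2 (\<lambda>g. cinner x (\<pi> g \<xi>j)) (carrier G)"
  using b unfolding bessel_vector_def l2_def by blast

lemma Theta_vec_row:
  "j < k \<Longrightarrow> g \<in> carrier G \<Longrightarrow> Theta_vec k G \<pi> \<xi> x j g = cinner x (\<pi> g (\<xi> j))"
  unfolding Theta_vec_def by simp

lemma l2_row_cong:
  "l2 a (carrier G) \<Longrightarrow> (\<And>g. g \<in> carrier G \<Longrightarrow> b g = a g) \<Longrightarrow> l2 b (carrier G)"
  by (erule l2_cong) simp

lemma syn_cong:
  "(\<And>g. g \<in> carrier G \<Longrightarrow> a g = b g) \<Longrightarrow> syn G \<pi> y a = syn G \<pi> y b"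
  unfolding syn_def by (rule infsum_cong) simp

lemma main_half:
  fixes G :: "('g, 'b) monoid_scheme"
    and \<pi> \<sigma> :: "'g \<Rightarrow> 'h::{complex_inner, complete_space} \<Rightarrow> 'h"
    and k :: nat
    and \<xi> \<eta> :: "nat \<Rightarrow> 'h"
  assumes grp: "group G"
    and R\<pi>: "proj_unitary_rep G \<pi>"
    and R\<sigma>: "proj_unitary_rep G \<sigma>"
    and cp: "commutant_pair G \<pi> \<sigma>"
    and dense: "closure {x. bessel_vector G \<pi> x} = UNIV"
    and b\<xi>: "\<forall>i<k. bessel_vector G \<pi> (\<xi> i)"
    and b\<eta>: "\<forall>i<k. bessel_vector G \<pi> (\<eta> i)"
    and hyp: "l2k_closed_span k G (Theta_vec k G \<pi> \<xi> ` UNIV) \<subseteq> l2k_closed_span k G (Theta_vec k G \<pi> \<eta> ` UNIV)"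
  shows "Hk_closed_span k ((\<lambda>g. rep_k k \<sigma> g \<xi>) ` carrier G) \<subseteq> Hk_closed_span k ((\<lambda>g. rep_k k \<sigma> g \<eta>) ` carrier G)"
proof -
  define C where "C = Cset k G \<sigma> \<eta>"
  interpret hs: hsub k C unfolding C_def by (rule C_hsub)
  define Q where "Q = hs.Qm"
  have TQ: "T (Q i j z) = Q i j (T z)" if "T \<in> commutant (\<pi> ` carrier G)" "j < k" for T i j z
    unfolding Q_def C_def by (rule commute_Q[OF grp R\<sigma> that(2) cp that(1)])
  have Qcl: "clinear (Q i j)" if "j < k" for i j unfolding Q_def by (rule hs.Qm_clinear[OF that])
  have Qb: "norm (Q i j x) \<le> norm x" if "j < k" for i j x unfolding Q_def by (rule hs.Qm_bound[OF that])
  define \<xi>' where "\<xi>' l = (if l < k then \<xi> l else 0)" for l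
  define \<eta>' where "\<eta>' l = (if l < k then \<eta> l else 0)" for l
  have \<xi>'V: "\<xi>' \<in> Vk k" unfolding Vk_def \<xi>'_def by simp
  have \<eta>'V: "\<eta>' \<in> Vk k" unfolding Vk_def \<eta>'_def by simp
  have \<eta>'C: "\<eta>' \<in> C"
  proof -
    have one: "\<one>\<^bsub>G\<^esub> \<in> carrier G" using grp by (simp add: group.is_monoid monoid.one_closed)
    define m where "m = pmu G \<sigma> \<one>\<^bsub>G\<^esub> \<one>\<^bsub>G\<^esub>"
    have m: "cnj m * m = 1" unfolding m_def by (rule cnj_mult_unit[OF pmu_norm[OF R\<sigma> one one]])
    have "\<eta>' = smul (cnj m) (rep_k k \<sigma> \<one>\<^bsub>G\<^esub> \<eta>)"
      unfolding smul_def rep_k_def \<eta>'_def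
      by (auto simp: fun_eq_iff rep_one[OF grp R\<sigma>] m_def[symmetric] scaleC_scaleC m scaleC_one)
    also have "\<dots> \<in> C" unfolding C_def by (rule hs.smul[unfolded C_def, OF C_elem[OF one]])
    finally show ?thesis .
  qed
  have Q\<eta>: "(\<Sum>j<k. Q i j (\<eta> j)) = 0" for i
  proof -
    have "\<eta>' i - hs.proj \<eta>' i = (\<Sum>j<k. Q i j (\<eta>' j))" unfolding Q_def by (rule hs.resid_sum[OF \<eta>'V])
    also have "\<dots> = (\<Sum>j<k. Q i j (\<eta> j))" unfolding \<eta>'_def by (intro sum.cong) auto
    finally show ?thesis using hs.proj_in[OF \<eta>'C] by simp
  qed
    have "\<forall>j. \<exists>B. j < k \<longrightarrow> (0 \<le> B \<and> (\<forall>z. (\<Sum>\<^sub>\<infinity>g\<in>carrier G. (cmod (cinner z (\<pi> g (\<eta> j))))\<^sup>2) \<le> B * (norm z)\<^sup>2))"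
  proof
    fix j
    show "\<exists>B. j < k \<longrightarrow> (0 \<le> B \<and> (\<forall>z. (\<Sum>\<^sub>\<infinity>g\<in>carrier G. (cmod (cinner z (\<pi> g (\<eta> j))))\<^sup>2) \<le> B * (norm z)\<^sup>2))"
    proof (cases "j < k")
      case True
      then obtain B where "0 \<le> B" "\<And>z. (\<Sum>\<^sub>\<infinity>g\<in>carrier G. (cmod (cinner z (\<pi> g (\<eta> j))))\<^sup>2) \<le> B * (norm z)\<^sup>2"
        using bessel_B[of G \<pi> "\<eta> j"] b\<eta> by metis
      then show ?thesis by blast
    qed auto
  qed
  then obtain B\<eta> where B\<eta>: "\<And>j. j < k \<Longrightarrow> 0 \<le> B\<eta> j"
    "\<And>j z. j < k \<Longrightarrow> (\<Sum>\<^sub>\<infinity>g\<in>carrier G. (cmod (cinner z (\<pi> g (\<eta> j))))\<^sup>2) \<le> B\<eta> j * (norm z)\<^sup>2"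
    by metis
  have l2\<eta>: "l2 (Theta_vec k G \<pi> \<eta> x j) (carrier G)" if "j < k" for x j
    by (rule l2_row_cong[OF Theta_row_l2[of G \<pi> "\<eta> j" x]]) (use b\<eta> that Theta_vec_row in auto)
  have l2\<xi>: "l2 (Theta_vec k G \<pi> \<xi> x j) (carrier G)" if "j < k" for x j
    by (rule l2_row_cong[OF Theta_row_l2[of G \<pi> "\<xi> j" x]]) (use b\<xi> that Theta_vec_row in auto)
  have claim: "(\<Sum>j<k. Q i j (\<xi> j)) = 0" for i
  proof -
    define w where "w = (\<Sum>j<k. Q i j (\<xi> j))"
    have Tw0: "Top G \<pi> x y w = 0" if bx: "bessel_vector G \<pi> x" and bessy: "bessel_vector G \<pi> y" for x y
    proof -
      obtain Bx where Bx: "0 \<le> Bx" "\<And>z. (\<lambda>g. (cmod (cinner z (\<pi> g x)))\<^sup>2) summable_on carrier G"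
        "\<And>z. (\<Sum>\<^sub>\<infinity>g\<in>carrier G. (cmod (cinner z (\<pi> g x)))\<^sup>2) \<le> Bx * (norm z)\<^sup>2"
        using bessel_B[OF bx] by blast
      obtain By where By: "0 \<le> By" "\<And>z. (\<lambda>g. (cmod (cinner z (\<pi> g y)))\<^sup>2) summable_on carrier G"
        "\<And>z. (\<Sum>\<^sub>\<infinity>g\<in>carrier G. (cmod (cinner z (\<pi> g y)))\<^sup>2) \<le> By * (norm z)\<^sup>2"
        using bessel_B[OF bessy] by blast
      interpret sc: syn_ctx G \<pi> y By by (rule syn_ctx.intro[OF grp R\<pi> By(1) By(2) By(3)])
      define L where "L a = (\<Sum>j<k. Q i j (syn G \<pi> y (a j)))" for a :: "nat \<Rightarrow> 'g \<Rightarrow> complex"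
      have Top_syn: "Top G \<pi> x' y z = syn G \<pi> y (\<lambda>h. cinner x' (\<pi> h z))" if bx': "bessel_vector G \<pi> x'" for x' z
      proof -
        obtain Bx' where Bx': "0 \<le> Bx'" "\<And>z. (\<lambda>g. (cmod (cinner z (\<pi> g x')))\<^sup>2) summable_on carrier G"
          "\<And>z. (\<Sum>\<^sub>\<infinity>g\<in>carrier G. (cmod (cinner z (\<pi> g x')))\<^sup>2) \<le> Bx' * (norm z)\<^sup>2"
          using bessel_B[OF bx'] by blast
        interpret tb: two_bessel G \<pi> x' y Bx' By
          by (rule two_bessel.intro[OF grp R\<pi> Bx'(1) Bx'(2) Bx'(3) By(1) By(2) By(3)])
        show ?thesis unfolding syn_def by (rule tb.T_apply_alt)
      qed
      have Tcomm: "Top G \<pi> x' y \<in> commutant (\<pi> ` carrier G)" "clinear (Top G \<pi> x' y)"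
        if bx': "bessel_vector G \<pi> x'" for x'
      proof -
        obtain Bx' where Bx': "0 \<le> Bx'" "\<And>z. (\<lambda>g. (cmod (cinner z (\<pi> g x')))\<^sup>2) summable_on carrier G"
          "\<And>z. (\<Sum>\<^sub>\<infinity>g\<in>carrier G. (cmod (cinner z (\<pi> g x')))\<^sup>2) \<le> Bx' * (norm z)\<^sup>2"
          using bessel_B[OF bx'] by blast
        interpret tb: two_bessel G \<pi> x' y Bx' By
          by (rule two_bessel.intro[OF grp R\<pi> Bx'(1) Bx'(2) Bx'(3) By(1) By(2) By(3)])
        show "Top G \<pi> x' y \<in> commutant (\<pi> ` carrier G)" by (rule tb.T_commutant)
        show "clinear (Top G \<pi> x' y)" by (rule tb.T_clinear)
      qed
      have L_Top: "L (Theta_vec k G \<pi> \<zeta> x') = Top G \<pi> x' y (\<Sum>j<k. Q i j (\<zeta> j))"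
        if bx': "bessel_vector G \<pi> x'" for x' \<zeta>
      proof -
        have "Top G \<pi> x' y (\<Sum>j<k. Q i j (\<zeta> j)) = (\<Sum>j<k. Top G \<pi> x' y (Q i j (\<zeta> j)))"
          by (rule clinear_sum[OF Tcomm(2)[OF bx']])
        also have "\<dots> = (\<Sum>j<k. Q i j (Top G \<pi> x' y (\<zeta> j)))"
          by (intro sum.cong refl TQ Tcomm(1)[OF bx']) auto
        also have "\<dots> = L (Theta_vec k G \<pi> \<zeta> x')"
          unfolding L_def
          by (intro sum.cong refl arg_cong[where f="Q i _"])
             (auto simp: Top_syn[OF bx'] Theta_vec_row intro!: syn_cong)
        finally show ?thesis by simp
      qed
      have Llip: "norm (L a - L b) \<le> sqrt By * (\<Sum>j<k. sqrt (\<Sum>\<^sub>\<infinity>g\<in>carrier G. (cmod (a j g - b j g))\<^sup>2))"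
        if la: "\<And>j. j < k \<Longrightarrow> l2 (a j) (carrier G)" and lb: "\<And>j. j < k \<Longrightarrow> l2 (b j) (carrier G)" for a b
      proof -
        have "L a - L b = (\<Sum>j<k. Q i j (syn G \<pi> y (\<lambda>g. a j g - b j g)))"
          unfolding L_def sum_subtractf[symmetric]
          by (intro sum.cong refl) (simp add: sc.syn_diff la lb clinear_diff[OF Qcl])
        also have "norm \<dots> \<le> (\<Sum>j<k. norm (Q i j (syn G \<pi> y (\<lambda>g. a j g - b j g))))" by (rule norm_sum)
        also have "\<dots> \<le> (\<Sum>j<k. sqrt By * sqrt (\<Sum>\<^sub>\<infinity>g\<in>carrier G. (cmod (a j g - b j g))\<^sup>2))"
        proof (rule sum_mono)
          fix j assume "j \<in> {..<k}"
          then have j: "j < k" by simp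
          have "norm (Q i j (syn G \<pi> y (\<lambda>g. a j g - b j g))) \<le> norm (syn G \<pi> y (\<lambda>g. a j g - b j g))"
            by (rule Qb[OF j])
          also have "\<dots> \<le> sqrt By * sqrt (\<Sum>\<^sub>\<infinity>g\<in>carrier G. (cmod (a j g - b j g))\<^sup>2)"
            by (rule sc.syn_norm[OF l2_diff[OF la[OF j] lb[OF j]]])
          finally show "norm (Q i j (syn G \<pi> y (\<lambda>g. a j g - b j g))) \<le> sqrt By * sqrt (\<Sum>\<^sub>\<infinity>g\<in>carrier G. (cmod (a j g - b j g))\<^sup>2)" .
        qed
        finally show ?thesis by (simp add: sum_distrib_left)
      qed
      have L\<eta>B: "L (Theta_vec k G \<pi> \<eta> x') = 0" if "bessel_vector G \<pi> x'" for x'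
        using L_Top[OF that, of \<eta>] Q\<eta>[of i] clinear_zero[OF Tcomm(2)[OF that]] by simp
      have L\<eta>: "L (Theta_vec k G \<pi> \<eta> x') = 0" for x'
      proof -
        define M where "M = sqrt By * (\<Sum>j<k. sqrt (B\<eta> j))"
        have M0: "0 \<le> M" unfolding M_def using By(1) B\<eta>(1) by (auto intro!: sum_nonneg mult_nonneg_nonneg)
        have "norm (L (Theta_vec k G \<pi> \<eta> x')) \<le> M * d" if d: "d > 0" for d
        proof -
          have "x' \<in> closure {x. bessel_vector G \<pi> x}" using dense by simp
          then obtain x'' where x'': "bessel_vector G \<pi> x''" "dist x'' x' < d"
            using closure_approachable d by blast
          have "norm (L (Theta_vec k G \<pi> \<eta> x')) = norm (L (Theta_vec k G \<pi> \<eta> x') - L (Theta_vec k G \<pi> \<eta> x''))"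
            using L\<eta>B[OF x''(1)] by simp
          also have "\<dots> \<le> sqrt By * (\<Sum>j<k. sqrt (\<Sum>\<^sub>\<infinity>g\<in>carrier G. (cmod (Theta_vec k G \<pi> \<eta> x' j g - Theta_vec k G \<pi> \<eta> x'' j g))\<^sup>2))"
            by (rule Llip) (auto intro: l2\<eta>)
          also have "\<dots> \<le> sqrt By * (\<Sum>j<k. sqrt (B\<eta> j) * d)"
          proof (intro mult_left_mono sum_mono)
            fix j assume "j \<in> {..<k}"
            then have j: "j < k" by simp
            have "(\<Sum>\<^sub>\<infinity>g\<in>carrier G. (cmod (Theta_vec k G \<pi> \<eta> x' j g - Theta_vec k G \<pi> \<eta> x'' j g))\<^sup>2)
                = (\<Sum>\<^sub>\<infinity>g\<in>carrier G. (cmod (cinner (x' - x'') (\<pi> g (\<eta> j))))\<^sup>2)"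
              by (rule infsum_cong) (simp add: Theta_vec_row j cinner_diff_left)
            also have "\<dots> \<le> B\<eta> j * (norm (x' - x''))\<^sup>2" by (rule B\<eta>(2)[OF j])
            also have "\<dots> \<le> B\<eta> j * d\<^sup>2"
              using x''(2) B\<eta>(1)[OF j] by (intro mult_left_mono power_mono) (auto simp: dist_norm norm_minus_commute)
            finally have "sqrt (\<Sum>\<^sub>\<infinity>g\<in>carrier G. (cmod (Theta_vec k G \<pi> \<eta> x' j g - Theta_vec k G \<pi> \<eta> x'' j g))\<^sup>2)
                \<le> sqrt (B\<eta> j * d\<^sup>2)" by (rule real_sqrt_le_mono)
            also have "\<dots> = sqrt (B\<eta> j) * d" using d by (simp add: real_sqrt_mult)
            finally show "sqrt (\<Sum>\<^sub>\<infinity>g\<in>carrier G. (cmod (Theta_vec k G \<pi> \<eta> x' j g - Theta_vec k G \<pi> \<eta> x'' j g))\<^sup>2)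
                \<le> sqrt (B\<eta> j) * d" .
          qed (use By(1) in simp)
          also have "\<dots> = M * d" unfolding M_def by (simp add: sum_distrib_right mult.assoc)
          finally show ?thesis .
        qed
        then have "norm (L (Theta_vec k G \<pi> \<eta> x')) \<le> M * sqrt e" if "e > 0" for e
          using that by simp
        then show ?thesis by (rule zero_if_small[OF M0])
      qed
      have Lspan: "L h = 0 \<and> (\<forall>j<k. l2 (h j) (carrier G))" if hS: "h \<in> l2k_span (Theta_vec k G \<pi> \<eta> ` UNIV)" for h
      proof -
        obtain A c where A: "finite A" "A \<subseteq> Theta_vec k G \<pi> \<eta> ` UNIV" "h = (\<lambda>i g. \<Sum>v\<in>A. c v * v i g)"
          using hS unfolding l2k_span_def by blast
        have l2A: "l2 (v j) (carrier G)" if "v \<in> A" "j < k" for v j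
          using A(2) that l2\<eta> by blast
        have L0: "L v = 0" if "v \<in> A" for v using A(2) that L\<eta> by blast
        have rows: "\<forall>j<k. l2 (h j) (carrier G)"
        proof (intro allI impI)
          fix j assume j: "j < k"
          show "l2 (h j) (carrier G)"
            unfolding A(3) by (rule l2_comb[OF A(1)]) (rule l2A[OF _ j])
        qed
        have "L h = (\<Sum>j<k. Q i j (\<Sum>v\<in>A. scaleC (cnj (c v)) (syn G \<pi> y (v j))))"
          unfolding L_def A(3) by (intro sum.cong refl arg_cong[where f="Q i _"] sc.syn_comb[OF A(1)] l2A) auto
        also have "\<dots> = (\<Sum>j<k. \<Sum>v\<in>A. scaleC (cnj (c v)) (Q i j (syn G \<pi> y (v j))))"
          by (intro sum.cong refl) (simp add: clinear_sum[OF Qcl] clinear_scaleC[OF Qcl])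
        also have "\<dots> = (\<Sum>v\<in>A. scaleC (cnj (c v)) (L v))"
          unfolding L_def by (subst sum.swap) (simp add: scaleC_sum_right)
        also have "\<dots> = 0" using L0 by simp
        finally show ?thesis using rows by simp
      qed
            have "Theta_vec k G \<pi> \<xi> x \<in> l2k_closed_span k G (Theta_vec k G \<pi> \<xi> ` UNIV)"
        unfolding l2k_closed_span_def
      proof (intro CollectI conjI allI impI)
        show "l2k k G (Theta_vec k G \<pi> \<xi> x)"
          unfolding l2k_def using l2\<xi>[of _ x] by (auto simp: Theta_vec_def l2_def)
        fix e :: real assume e: "e > 0"
        have "Theta_vec k G \<pi> \<xi> x \<in> l2k_span (Theta_vec k G \<pi> \<xi> ` UNIV)"
          unfolding l2k_span_def
          by (intro CollectI exI[of _ "{Theta_vec k G \<pi> \<xi> x}"] exI[of _ "\<lambda>_. 1"]) auto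
        moreover have "l2k_dist2 k G (Theta_vec k G \<pi> \<xi> x) (Theta_vec k G \<pi> \<xi> x) < e"
          unfolding l2k_dist2_def using e by simp
        ultimately show "\<exists>h\<in>l2k_span (Theta_vec k G \<pi> \<xi> ` UNIV). l2k_dist2 k G (Theta_vec k G \<pi> \<xi> x) h < e"
          by blast
      qed
      with hyp have mem: "Theta_vec k G \<pi> \<xi> x \<in> l2k_closed_span k G (Theta_vec k G \<pi> \<eta> ` UNIV)" by blast
      have TwL: "Top G \<pi> x y w = L (Theta_vec k G \<pi> \<xi> x)"
        unfolding w_def by (rule L_Top[OF bx, symmetric])
      define K where "K = sqrt By * real k"
      have K0: "0 \<le> K" unfolding K_def using By(1) by simp
      have "norm (L (Theta_vec k G \<pi> \<xi> x)) \<le> K * sqrt e" if e: "e > 0" for e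
      proof -
        obtain h where h: "h \<in> l2k_span (Theta_vec k G \<pi> \<eta> ` UNIV)"
          "l2k_dist2 k G (Theta_vec k G \<pi> \<xi> x) h < e"
          using mem e unfolding l2k_closed_span_def by blast
        have Lh: "L h = 0" and rows: "\<And>j. j < k \<Longrightarrow> l2 (h j) (carrier G)" using Lspan[OF h(1)] by auto
        have dj: "(\<Sum>\<^sub>\<infinity>g\<in>carrier G. (cmod (Theta_vec k G \<pi> \<xi> x j g - h j g))\<^sup>2) \<le> e" if j: "j < k" for j
        proof -
          have "(\<Sum>\<^sub>\<infinity>g\<in>carrier G. (cmod (Theta_vec k G \<pi> \<xi> x j g - h j g))\<^sup>2)
              \<le> (\<Sum>j'\<in>{..<k}. \<Sum>\<^sub>\<infinity>g\<in>carrier G. (cmod (Theta_vec k G \<pi> \<xi> x j' g - h j' g))\<^sup>2)"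
            by (rule member_le_sum) (use j in \<open>auto intro: infsum_nonneg\<close>)
          also have "\<dots> < e" using h(2) unfolding l2k_dist2_def lessThan_def by simp
          finally show ?thesis by simp
        qed
        have "norm (L (Theta_vec k G \<pi> \<xi> x)) = norm (L (Theta_vec k G \<pi> \<xi> x) - L h)" using Lh by simp
        also have "\<dots> \<le> sqrt By * (\<Sum>j<k. sqrt (\<Sum>\<^sub>\<infinity>g\<in>carrier G. (cmod (Theta_vec k G \<pi> \<xi> x j g - h j g))\<^sup>2))"
          by (rule Llip) (auto intro: l2\<xi> rows)
        also have "\<dots> \<le> sqrt By * (\<Sum>j<k. sqrt e)"
          by (intro mult_left_mono sum_mono real_sqrt_le_mono dj) (auto simp: By(1))
        also have "\<dots> = K * sqrt e" unfolding K_def by simp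
        finally show ?thesis .
      qed
      then have "L (Theta_vec k G \<pi> \<xi> x) = 0" by (rule zero_if_small[OF K0])
      then show ?thesis using TwL by simp
    qed
    have "w = 0"
    proof (rule zero_from_dense[OF dense])
      fix x assume "x \<in> {x. bessel_vector G \<pi> x}"
      then have bx: "bessel_vector G \<pi> x" by simp
      show "cinner w x = 0" by (rule T_self_zero[OF grp R\<pi> bx Tw0[OF bx bx]])
    qed
    then show ?thesis unfolding w_def .
  qed
  have "hs.proj \<xi>' = \<xi>'"
  proof
    fix l
    show "hs.proj \<xi>' l = \<xi>' l"
    proof (cases "l < k")
      case True
      have "\<xi>' l - hs.proj \<xi>' l = (\<Sum>j<k. Q l j (\<xi>' j))" unfolding Q_def by (rule hs.resid_sum[OF \<xi>'V])
      also have "\<dots> = (\<Sum>j<k. Q l j (\<xi> j))" unfolding \<xi>'_def by (intro sum.cong) auto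
      also have "\<dots> = 0" by (rule claim)
      finally show ?thesis by simp
    next
      case False
      then show ?thesis using hs.in_Vk[OF hs.proj(1)[OF \<xi>'V]] \<xi>'V unfolding Vk_def by simp
    qed
  qed
  then have \<xi>'C: "\<xi>' \<in> C" using hs.proj(1)[OF \<xi>'V] by simp
  have "(\<lambda>g. rep_k k \<sigma> g \<xi>) ` carrier G \<subseteq> C"
  proof
    fix s assume "s \<in> (\<lambda>g. rep_k k \<sigma> g \<xi>) ` carrier G"
    then obtain g where g: "g \<in> carrier G" "s = rep_k k \<sigma> g \<xi>" by blast
    have "s = repW k (\<sigma> g) \<xi>'" unfolding g(2) rep_k_def repW_def \<xi>'_def by auto
    also have "\<dots> \<in> C" unfolding C_def by (rule C_inv_sigma[OF grp R\<sigma> g(1) \<xi>'C[unfolded C_def]])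
    finally show "s \<in> C" .
  qed
  then have "Hk_closed_span k ((\<lambda>g. rep_k k \<sigma> g \<xi>) ` carrier G) \<subseteq> C"
    by (rule CS_least[OF hs.hsub_axioms])
  then show ?thesis unfolding C_def Cset_def .
qed



theorem lemma3p6:
  fixes G :: "('g, 'b) monoid_scheme"
    and \<pi> \<sigma> :: "'g \<Rightarrow> 'h::{complex_inner, complete_space} \<Rightarrow> 'h"
    and k :: nat
    and \<xi> \<eta> :: "nat \<Rightarrow> 'h"
  assumes "group G"
    and "countable (carrier G)"
    and "proj_unitary_rep G \<pi>"
    and "proj_unitary_rep G \<sigma>"
    and "commutant_pair G \<pi> \<sigma>"
    and "closure {x. bessel_vector G \<pi> x} = UNIV"
    and "\<forall>i<k. bessel_vector G \<pi> (\<xi> i)"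
    and "\<forall>i<k. bessel_vector G \<pi> (\<eta> i)"
    and "l2k_closed_span k G (Theta_vec k G \<pi> \<xi> ` UNIV) = l2k_closed_span k G (Theta_vec k G \<pi> \<eta> ` UNIV)"
  shows "Hk_closed_span k ((\<lambda>g. rep_k k \<sigma> g \<xi>) ` carrier G) = Hk_closed_span k ((\<lambda>g. rep_k k \<sigma> g \<eta>) ` carrier G)"
proof
  show "Hk_closed_span k ((\<lambda>g. rep_k k \<sigma> g \<xi>) ` carrier G) \<subseteq> Hk_closed_span k ((\<lambda>g. rep_k k \<sigma> g \<eta>) ` carrier G)"
    by (rule main_half[OF assms(1) assms(3) assms(4) assms(5) assms(6) assms(7) assms(8)]) (use assms(9) in simp)
  show "Hk_closed_span k ((\<lambda>g. rep_k k \<sigma> g \<eta>) ` carrier G) \<subseteq> Hk_closed_span k ((\<lambda>g. rep_k k \<sigma> g \<xi>) ` carrier G)"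
    by (rule main_half[OF assms(1) assms(3) assms(4) assms(5) assms(6) assms(8) assms(7)]) (use assms(9) in simp)
qed

end
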